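(* Let $f:\mathbb{R}^\ell\times\mathbb{R}^m\to\mathbb{R}^\ell$ be $C^1$, let $\Lambda$ be a parameter shift with limits $\lambda_\pm$, and let $X$ define a stable path. Let $\epsilon>0$. Then there exists $r_0>0$ such that for every $r\in(0,r_0)$ there is a solution $\{y_n\}_{n\in\mathbb{Z}}$ of $x_{n+1}=f(x_n,\Lambda(rn))$ with $\|y_n-X(rn)\|<\epsilon$ for all $n\in\mathbb{Z}$ (Euclidean norm).
   Context: A parameter shift is a $C^1$ function $\Lambda:\mathbb{R}\to\mathbb{R}^m$ with $\lim_{s\to\pm\infty}\Lambda(s)=\lambda_\pm$ and $\lim_{s\to\pm\infty}\Lambda'(s)=0$. A stable path is given by $X:\mathbb{R}\to\mathbb{R}^\ell$ such that: $X(s)$ is a fixed point of $f(\cdot,\Lambda(s))$ for every $s$; $\{(s,X(s))\}$ is a connected curve; the limits $X_\pm=\lim_{s\to\pm\infty}X(s)$ exist and are fixed points of $f(\cdot,\lambda_\pm)$; and the spectral radius of $D_xf(X(s),\Lambda(s))$ is $<1$ for all $s\in\mathbb{R}\cup\{\pm\infty\}$ (with $X(\pm\infty)=X_\pm$, $\Lambda(\pm\infty)=\lambda_\pm$). A solution of $x_{n+1}=f(x_n,\Lambda(rn))$ is a sequence $\{x_n\}_{n\in\mathbb{Z}}$ satisfying it for all $n\in\mathbb{Z}$. *)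

theory Defs
  imports "HOL-Analysis.Analysis"
begin

definition C1_map :: "('a::euclidean_space \<Rightarrow> 'b::euclidean_space) \<Rightarrow> bool" where
  "C1_map g \<longleftrightarrow> (\<exists>g'::'a \<Rightarrow> ('a \<Rightarrow>\<^sub>L 'b).
      (\<forall>z. (g has_derivative blinfun_apply (g' z)) (at z)) \<and> continuous_on UNIV g')"

definition parameter_shift ::
  "(real \<Rightarrow> real^'m) \<Rightarrow> real^'m \<Rightarrow> real^'m \<Rightarrow> bool" where
  "parameter_shift Lam lm lp \<longleftrightarrow> (\<exists>Lam'. (\<forall>s. (Lam has_vector_derivative Lam' s) (at s))
      \<and> continuous_on UNIV Lam'
      \<and> (Lam \<longlongrightarrow> lp) at_top \<and> (Lam \<longlongrightarrow> lm) at_bot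
      \<and> (Lam' \<longlongrightarrow> 0) at_top \<and> (Lam' \<longlongrightarrow> 0) at_bot)"

definition is_fixed_point ::
  "((real^'l) \<times> (real^'m) \<Rightarrow> real^'l) \<Rightarrow> real^'m \<Rightarrow> real^'l \<Rightarrow> bool" where
  "is_fixed_point f lam x \<longleftrightarrow> f (x, lam) = x"

definition Dx :: "((real^'l) \<times> (real^'m) \<Rightarrow> real^'l) \<Rightarrow> real^'l \<Rightarrow> real^'m \<Rightarrow> (real^'l \<Rightarrow> real^'l)" where
  "Dx f x lam = frechet_derivative (\<lambda>y. f (y, lam)) (at x)"

definition complexify :: "real^'n^'n \<Rightarrow> complex^'n^'n" where
  "complexify A = (\<chi> i j. complex_of_real (A $ i $ j))"

definition eigenvalues_c :: "real^'n^'n \<Rightarrow> complex set" where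
  "eigenvalues_c A = {z. \<exists>v::complex^'n. v \<noteq> 0 \<and> complexify A *v v = z *s v}"

definition spectral_radius_r :: "real^'n^'n \<Rightarrow> real" where
  "spectral_radius_r A = Max (cmod ` eigenvalues_c A)"

definition stable_path ::
  "((real^'l) \<times> (real^'m) \<Rightarrow> real^'l) \<Rightarrow> (real \<Rightarrow> real^'m) \<Rightarrow> real^'m \<Rightarrow> real^'m
     \<Rightarrow> (real \<Rightarrow> real^'l) \<Rightarrow> bool" where
  "stable_path f Lam lm lp X \<longleftrightarrow>
     (\<forall>s. is_fixed_point f (Lam s) (X s))
   \<and> connected (range (\<lambda>s. (s, X s)))
   \<and> (\<exists>Xm Xp. (X \<longlongrightarrow> Xp) at_top \<and> (X \<longlongrightarrow> Xm) at_bot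
        \<and> is_fixed_point f lp Xp \<and> is_fixed_point f lm Xm
        \<and> (\<forall>s. spectral_radius_r (matrix (Dx f (X s) (Lam s))) < 1)
        \<and> spectral_radius_r (matrix (Dx f Xp lp)) < 1
        \<and> spectral_radius_r (matrix (Dx f Xm lm)) < 1)"

definition is_solution ::
  "((real^'l) \<times> (real^'m) \<Rightarrow> real^'l) \<Rightarrow> (real \<Rightarrow> real^'m) \<Rightarrow> real \<Rightarrow> (int \<Rightarrow> real^'l) \<Rightarrow> bool" where
  "is_solution f Lam r y \<longleftrightarrow> (\<forall>n::int. y (n + 1) = f (y n, Lam (r * of_int n)))"

end

theory Submission
  imports Defs Jordan_Normal_Form.Spectral_Radius
begin

no_notation Matrix.vec_index (infixl "$" 100)
no_notation Matrix.scalar_prod (infix "\<bullet>" 70)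

definition cmat :: "(nat \<Rightarrow> 'n::finite) \<Rightarrow> real^'n^'n \<Rightarrow> complex Matrix.mat" where
 "cmat h A = Matrix.mat CARD('n) CARD('n) (\<lambda>(i,j). complex_of_real (A $ h i $ h j))"

lemma cmat_carrier: "cmat (h::nat\<Rightarrow>'n::finite) (A::real^'n^'n) \<in> carrier_mat CARD('n) CARD('n)"
  by (simp add: cmat_def)

lemma cmat_mult:
  assumes h: "bij_betw h {..<CARD('n)} (UNIV::'n::finite set)"
  shows "cmat h ((A::real^'n^'n) ** B) = cmat h A * cmat h B"
proof (rule eq_matI)
  fix i j assume i: "i < dim_row (cmat h A * cmat h B)" and j: "j < dim_col (cmat h A * cmat h B)"
  then have i': "i < CARD('n)" and j': "j < CARD('n)" by (auto simp: cmat_def)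
  have "(cmat h A * cmat h B) $$ (i,j) = (\<Sum>k<CARD('n). complex_of_real (A $ h i $ h k) * complex_of_real (B $ h k $ h j))"
    using i' j' by (simp add: cmat_def Matrix.scalar_prod_def atLeast0LessThan)
  also have "\<dots> = (\<Sum>l\<in>UNIV. complex_of_real (A $ h i $ l) * complex_of_real (B $ l $ h j))"
    using sum.reindex_bij_betw[OF h, of "\<lambda>l. complex_of_real (A $ h i $ l) * complex_of_real (B $ l $ h j)"]
    by simp
  also have "\<dots> = cmat h (A ** B) $$ (i,j)"
    using i' j' by (simp add: cmat_def matrix_matrix_mult_def)
  finally show "cmat h (A ** B) $$ (i, j) = (cmat h A * cmat h B) $$ (i, j)" by simp
qed (auto simp: cmat_def)

lemma cmat_one:
  assumes h: "bij_betw h {..<CARD('n)} (UNIV::'n::finite set)"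
  shows "cmat h (Finite_Cartesian_Product.mat 1 :: real^'n^'n) = 1\<^sub>m CARD('n)"
proof (rule eq_matI)
  fix i j assume "i < dim_row (1\<^sub>m CARD('n))" "j < dim_col (1\<^sub>m CARD('n))"
  then have i': "i < CARD('n)" and j': "j < CARD('n)" by auto
  have "h i = h j \<longleftrightarrow> i = j" using h i' j' unfolding bij_betw_def inj_on_def by auto
  then show "cmat h (Finite_Cartesian_Product.mat 1 :: real^'n^'n) $$ (i, j) = 1\<^sub>m CARD('n) $$ (i, j)"
    using i' j' by (simp add: cmat_def Finite_Cartesian_Product.mat_def)
qed (auto simp: cmat_def)

lemma cmat_pow:
  assumes h: "bij_betw h {..<CARD('n)} (UNIV::'n::finite set)"
    and L: "linear (L :: real^'n \<Rightarrow> real^'n)"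
  shows "linear (L^^k) \<and> cmat h (matrix (L^^k)) = cmat h (matrix L) ^\<^sub>m k"
proof (induction k)
  case 0
  then show ?case using cmat_one[OF h] by (simp add: matrix_id_mat_1[unfolded id_def] linear_id[unfolded id_def] cmat_def)
next
  case (Suc k)
  have lin: "linear (L^^Suc k)" using Suc L by (simp add: funpow_Suc_right linear_compose)
  have "L^^Suc k = L^^k \<circ> L" by (rule funpow_Suc_right)
  then have "matrix (L^^Suc k) = matrix (L^^k) ** matrix L"
    using matrix_compose[OF L, of "L^^k"] Suc by (simp del: funpow.simps)
  then show ?case using lin Suc cmat_mult[OF h] by (simp del: funpow.simps)
qed


lemma eig_to_jnf:
  assumes h: "bij_betw h {..<CARD('n)} (UNIV::'n::finite set)"
    and z: "z \<in> eigenvalues_c (A::real^'n^'n)"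
  shows "z \<in> Spectral_Radius.spectrum (cmat h A)"
proof -
  obtain w :: "complex^'n" where w0: "w \<noteq> 0" and wz: "complexify A *v w = z *s w"
    using z by (auto simp: eigenvalues_c_def)
  define v where "v = Matrix.vec CARD('n) (\<lambda>i. w $ h i)"
  have vc: "v \<in> carrier_vec CARD('n)" by (simp add: v_def)
  obtain l where l: "w $ l \<noteq> 0" using w0 by (metis (full_types) Finite_Cartesian_Product.vec_eq_iff Finite_Cartesian_Product.zero_index)
  obtain i where i: "i < CARD('n)" "h i = l" using h unfolding bij_betw_def by (metis UNIV_I imageE lessThan_iff)
  have vne: "v \<noteq> 0\<^sub>v CARD('n)"
  proof
    assume "v = 0\<^sub>v CARD('n)"
    then have "vec_index v i = 0" using i by simp
    then show False using i l by (simp add: v_def)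
  qed
  have "cmat h A *\<^sub>v v = z \<cdot>\<^sub>v v"
  proof (rule eq_vecI)
    fix i assume "i < dim_vec (z \<cdot>\<^sub>v v)"
    then have i: "i < CARD('n)" by (simp add: v_def)
    have "vec_index (cmat h A *\<^sub>v v) i = (\<Sum>k<CARD('n). complex_of_real (A $ h i $ h k) * w $ h k)"
      using i by (simp add: cmat_def v_def Matrix.scalar_prod_def atLeast0LessThan)
    also have "\<dots> = (\<Sum>l\<in>UNIV. complex_of_real (A $ h i $ l) * w $ l)"
      using sum.reindex_bij_betw[OF h, of "\<lambda>l. complex_of_real (A $ h i $ l) * w $ l"] by simp
    also have "\<dots> = (complexify A *v w) $ h i"
      by (simp add: complexify_def matrix_vector_mult_def)
    also have "\<dots> = z * w $ h i" using wz by simp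
    also have "\<dots> = vec_index (z \<cdot>\<^sub>v v) i" using i by (simp add: v_def)
    finally show "vec_index (cmat h A *\<^sub>v v) i = vec_index (z \<cdot>\<^sub>v v) i" .
  qed (simp add: cmat_def v_def)
  then have "eigenvector (cmat h A) v z"
    using vc vne by (simp add: eigenvector_def cmat_def)
  then show ?thesis by (auto simp: Spectral_Radius.spectrum_def eigenvalue_def)
qed

lemma eig_from_jnf:
  assumes h: "bij_betw h {..<CARD('n)} (UNIV::'n::finite set)"
    and z: "z \<in> Spectral_Radius.spectrum (cmat h (A::real^'n^'n))"
  shows "z \<in> eigenvalues_c A"
proof -
  obtain v where ev: "eigenvector (cmat h A) v z"
    using z by (auto simp: Spectral_Radius.spectrum_def eigenvalue_def)
  then have vc: "v \<in> carrier_vec CARD('n)" and vne: "v \<noteq> 0\<^sub>v CARD('n)"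
    and vz: "cmat h A *\<^sub>v v = z \<cdot>\<^sub>v v"
    by (auto simp: eigenvector_def cmat_def)
  define g where "g = the_inv_into {..<CARD('n)} h"
  have hg: "h (g l) = l" and gl: "g l < CARD('n)" for l
    using h unfolding g_def bij_betw_def
     apply (auto intro: f_the_inv_into_f)
    by (metis UNIV_I lessThan_iff order_refl the_inv_into_into)
  have gh: "i < CARD('n) \<Longrightarrow> g (h i) = i" for i
    using h unfolding g_def bij_betw_def by (simp add: the_inv_into_f_f)
  define w :: "complex^'n" where "w = (\<chi> l. vec_index v (g l))"
  have "w \<noteq> 0"
  proof
    assume w0: "w = 0"
    have "v = 0\<^sub>v CARD('n)"
    proof (rule eq_vecI)
      fix i assume "i < dim_vec (0\<^sub>v CARD('n))"
      then have i: "i < CARD('n)" by simp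
      have "vec_index v i = w $ h i" using gh[OF i] by (simp add: w_def)
      then show "vec_index v i = vec_index (0\<^sub>v CARD('n)) i" using w0 i by simp
    qed (use vc in simp)
    then show False using vne by simp
  qed
  moreover have "complexify A *v w = z *s w"
  unfolding Finite_Cartesian_Product.vec_eq_iff
  proof
    fix l :: 'n
    have "(complexify A *v w) $ l = (\<Sum>m\<in>UNIV. complex_of_real (A $ h (g l) $ m) * w $ m)"
      by (simp add: complexify_def matrix_vector_mult_def hg)
    also have "\<dots> = (\<Sum>k<CARD('n). complex_of_real (A $ h (g l) $ h k) * w $ h k)"
      using sum.reindex_bij_betw[OF h, of "\<lambda>m. complex_of_real (A $ h (g l) $ m) * w $ m"] by simp
    also have "\<dots> = (\<Sum>k<CARD('n). complex_of_real (A $ h (g l) $ h k) * vec_index v k)"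
      by (intro sum.cong) (auto simp: w_def gh)
    also have "\<dots> = vec_index (cmat h A *\<^sub>v v) (g l)"
      using gl vc by (simp add: cmat_def Matrix.scalar_prod_def atLeast0LessThan)
    also have "\<dots> = z * vec_index v (g l)" using vz gl vc by simp
    also have "\<dots> = (z *s w) $ l" by (simp add: w_def)
    finally show "(complexify A *v w) $ l = (z *s w) $ l" .
  qed
  ultimately show ?thesis by (auto simp: eigenvalues_c_def)
qed

lemma mat_vec_bound:
  fixes M :: "real^'n^'n"
  assumes "\<And>i j. \<bar>M $ i $ j\<bar> \<le> c"
  shows "norm (M *v v) \<le> real CARD('n) * real CARD('n) * c * norm v"
proof -
  have "norm (M *v v) \<le> (\<Sum>i\<in>UNIV. \<bar>(M *v v) $ i\<bar>)" by (rule norm_le_l1_cart)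
  also have "\<dots> \<le> (\<Sum>i\<in>(UNIV::'n set). \<Sum>j\<in>(UNIV::'n set). c * norm v)"
  proof (rule sum_mono)
    fix i
    have "\<bar>(M *v v) $ i\<bar> = \<bar>\<Sum>j\<in>UNIV. M $ i $ j * v $ j\<bar>"
      by (simp add: matrix_vector_mult_def)
    also have "\<dots> \<le> (\<Sum>j\<in>UNIV. \<bar>M $ i $ j * v $ j\<bar>)" by (rule sum_abs)
    also have "\<dots> \<le> (\<Sum>j\<in>(UNIV::'n set). c * norm v)"
    proof (rule sum_mono)
      fix j
      show "\<bar>M $ i $ j * v $ j\<bar> \<le> c * norm v"
        unfolding abs_mult
        by (rule mult_mono[OF assms component_le_norm_cart]) (auto intro: order_trans[OF _ assms])
    qed
    finally show "\<bar>(M *v v) $ i\<bar> \<le> (\<Sum>j\<in>(UNIV::'n set). c * norm v)" .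
  qed
  also have "\<dots> = real CARD('n) * real CARD('n) * c * norm v" by simp
  finally show ?thesis .
qed

lemma pow_bounded:
  fixes L :: "real^'n \<Rightarrow> real^'n"
  assumes L: "linear L" and E: "\<forall>z\<in>eigenvalues_c (matrix L). cmod z < 1"
  shows "\<exists>c. \<forall>k v. norm ((L^^k) v) \<le> c * norm v"
proof -
  obtain h where h0: "bij_betw h {0..<card (UNIV::'n set)} (UNIV::'n set)"
    using ex_bij_betw_nat_finite[of "UNIV::'n set"] by auto
  then have h: "bij_betw h {..<CARD('n)} (UNIV::'n set)" by (simp add: atLeast0LessThan)
  define B where "B = cmat h (matrix L)"
  have Bc: "B \<in> carrier_mat CARD('n) CARD('n)" by (simp add: B_def cmat_carrier)
  have n0: "CARD('n) > 0" by simp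
  have "spectral_radius B \<in> norm ` Spectral_Radius.spectrum B"
    by (rule spectral_radius_mem_max(1)[OF Bc n0])
  then obtain z where z: "z \<in> Spectral_Radius.spectrum B" and sr: "spectral_radius B = norm z" by auto
  have "z \<in> eigenvalues_c (matrix L)" using eig_from_jnf[OF h] z by (simp add: B_def)
  then have "spectral_radius B < 1" using E sr by auto
  from spectral_radius_jnf_norm_bound_less_1_upper_triangular[OF Bc this]
  obtain c where c: "\<And>k. norm_bound (B ^\<^sub>m k) c" by auto
  have "norm ((L^^k) v) \<le> real CARD('n) * real CARD('n) * c * norm v" for k v
  proof -
    have lk: "linear (L^^k)" and ck: "cmat h (matrix (L^^k)) = B ^\<^sub>m k"
      using cmat_pow[OF h L, of k] by (auto simp: B_def)
    have ent: "\<bar>matrix (L^^k) $ i $ j\<bar> \<le> c" for i j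
    proof -
      obtain i' where i': "i' < CARD('n)" "h i' = i" using h unfolding bij_betw_def by (metis UNIV_I imageE lessThan_iff)
      obtain j' where j': "j' < CARD('n)" "h j' = j" using h unfolding bij_betw_def by (metis UNIV_I imageE lessThan_iff)
      have "norm ((B ^\<^sub>m k) $$ (i',j')) \<le> c"
        using c[of k] i' j' Bc unfolding norm_bound_def by auto
      moreover have "(B ^\<^sub>m k) $$ (i',j') = complex_of_real (matrix (L^^k) $ i $ j)"
        unfolding ck[symmetric] using i' j' by (simp add: cmat_def)
      ultimately show ?thesis by simp
    qed
    have "(L^^k) v = matrix (L^^k) *v v" using matrix_vector_mul(2)[OF lk] by metis
    then show ?thesis using mat_vec_bound[OF ent] by simp
  qed
  then show ?thesis by blast
qed

lemma eig_finite: "finite (eigenvalues_c (A::real^'n^'n))"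
proof -
  obtain h where h0: "bij_betw h {0..<card (UNIV::'n set)} (UNIV::'n set)"
    using ex_bij_betw_nat_finite[of "UNIV::'n set"] by auto
  then have h: "bij_betw h {..<CARD('n)} (UNIV::'n set)" by (simp add: atLeast0LessThan)
  have "eigenvalues_c A \<subseteq> Spectral_Radius.spectrum (cmat h A)"
    using eig_to_jnf[OF h] by blast
  moreover have "finite (Spectral_Radius.spectrum (cmat h A))"
    by (rule card_finite_spectrum(1)[OF cmat_carrier])
  ultimately show ?thesis by (rule finite_subset)
qed

lemma power_half:
  fixes L :: "real^'n \<Rightarrow> real^'n"
  assumes L: "linear L" and sr: "spectral_radius_r (matrix L) < 1"
  shows "\<exists>k. \<forall>v. norm ((L^^k) v) \<le> 1/2 * norm v"
proof -
  define E where "E = eigenvalues_c (matrix L)"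
  define \<rho> where "\<rho> = spectral_radius_r (matrix L)"
  have Eb: "z \<in> E \<Longrightarrow> cmod z \<le> \<rho>" for z
    unfolding \<rho>_def spectral_radius_r_def E_def using eig_finite by (intro Max_ge) auto
  define \<rho>' where "\<rho>' = (max \<rho> 0 + 1) / 2"
  have r1: "0 < \<rho>'" "\<rho>' < 1" "\<rho> < \<rho>'" using sr by (auto simp: \<rho>'_def \<rho>_def)
  define L' where "L' = (\<lambda>v. (1/\<rho>') *\<^sub>R L v)"
  have L': "linear L'" unfolding L'_def using L by (simp add: linear_iff linear_add[OF L] linear_cmul[OF L] scaleR_add_right)
  have mL': "matrix L' $ i $ j = (1/\<rho>') * (matrix L $ i $ j)" for i j
    by (simp add: matrix_def L'_def)
  have "\<forall>z\<in>eigenvalues_c (matrix L'). cmod z < 1"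
  proof
    fix z assume "z \<in> eigenvalues_c (matrix L')"
    then obtain w :: "complex^'n" where w0: "w \<noteq> 0" and wz: "complexify (matrix L') *v w = z *s w"
      by (auto simp: eigenvalues_c_def)
    have "complexify (matrix L) *v w = (complex_of_real \<rho>' * z) *s w"
      unfolding Finite_Cartesian_Product.vec_eq_iff
    proof
      fix i
      have "(complexify (matrix L') *v w) $ i = complex_of_real (1/\<rho>') * (complexify (matrix L) *v w) $ i"
        by (simp add: matrix_vector_mult_def complexify_def mL' sum_distrib_left mult.assoc)
      then have "(complexify (matrix L) *v w) $ i = complex_of_real \<rho>' * (complexify (matrix L') *v w) $ i"
        using r1 by (simp add: field_simps)
      then show "(complexify (matrix L) *v w) $ i = ((complex_of_real \<rho>' * z) *s w) $ i"
        using wz by simp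
    qed
    then have "complex_of_real \<rho>' * z \<in> E" using w0 by (auto simp: E_def eigenvalues_c_def)
    then have "cmod (complex_of_real \<rho>' * z) \<le> \<rho>" by (rule Eb)
    then have "\<rho>' * cmod z \<le> \<rho>" using r1 by (simp add: norm_mult)
    then have "\<rho>' * cmod z < \<rho>' * 1" using r1 by linarith
    then show "cmod z < 1" using r1 by (simp only: mult_less_cancel_left_pos)
  qed
  from pow_bounded[OF L' this] obtain c where c: "\<And>k v. norm ((L'^^k) v) \<le> c * norm v" by auto
  have pw: "(L'^^k) v = (1/\<rho>')^k *\<^sub>R (L^^k) v" for k v
  proof (induction k)
    case (Suc k)
    have "(L'^^Suc k) v = L' ((L'^^k) v)" by simp
    also have "\<dots> = (1/\<rho>') *\<^sub>R L ((1/\<rho>')^k *\<^sub>R (L^^k) v)" using Suc by (simp add: L'_def)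
    also have "\<dots> = (1/\<rho>')^Suc k *\<^sub>R (L^^Suc k) v" using linear_cmul[OF L] by simp
    finally show ?case .
  qed simp
  obtain k where k: "\<rho>'^k < 1 / (2 * (\<bar>c\<bar> + 1))"
  proof -
    have "(0::real) < 1 / (2 * (\<bar>c\<bar> + 1))" by (simp add: add_pos_nonneg)
    then show ?thesis using real_arch_pow_inv[of "1 / (2 * (\<bar>c\<bar> + 1))" \<rho>'] r1 that by blast
  qed
  have "norm ((L^^k) v) \<le> 1/2 * norm v" for v
  proof -
    have "norm ((L^^k) v) = \<rho>'^k * norm ((L'^^k) v)" using r1 by (simp add: pw field_simps)
    also have "\<dots> \<le> \<rho>'^k * (\<bar>c\<bar> * norm v)"
      using c[of k v] r1 by (intro mult_left_mono) (auto intro: order_trans[OF _ mult_right_mono[OF abs_ge_self]])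
    also have "\<dots> \<le> 1 / (2 * (\<bar>c\<bar> + 1)) * (\<bar>c\<bar> * norm v)"
      using k by (intro mult_right_mono) auto
    also have "\<dots> \<le> 1/2 * norm v" by (simp add: field_simps)
    finally show ?thesis .
  qed
  then show ?thesis by blast
qed


definition anorm :: "(real^'n \<Rightarrow> real) \<Rightarrow> real \<Rightarrow> bool" where
 "anorm N C \<longleftrightarrow> 1 \<le> C \<and> (\<forall>v. norm v \<le> N v \<and> N v \<le> C * norm v)
    \<and> (\<forall>u v. N (u + v) \<le> N u + N v) \<and> (\<forall>v. N (- v) = N v)"

lemma anormD:
  assumes "anorm N C"
  shows "1 \<le> C" "norm v \<le> N v" "N v \<le> C * norm v" "N (u + v) \<le> N u + N v" "N (- v) = N v"
    "N (u - v) \<le> N u + N v" "0 \<le> N v"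
proof -
  show "1 \<le> C" "norm v \<le> N v" "N v \<le> C * norm v" "N (u + v) \<le> N u + N v" "N (- v) = N v"
    using assms by (auto simp: anorm_def)
  show "N (u - v) \<le> N u + N v" using assms unfolding anorm_def
    by (metis diff_conv_add_uminus)
  show "0 \<le> N v" using assms unfolding anorm_def by (meson norm_ge_zero order_trans)
qed

lemma adapted_norm:
  fixes L :: "real^'n \<Rightarrow> real^'n"
  assumes L: "linear L" and sr: "spectral_radius_r (matrix L) < 1"
  shows "\<exists>N C q. anorm N C \<and> 0 \<le> q \<and> q < 1 \<and> (\<forall>v. N (L v) \<le> q * N v)"
proof -
  obtain k where k: "\<And>v. norm ((L^^k) v) \<le> 1/2 * norm v" using power_half[OF L sr] by auto
  have lin: "linear (L^^j)" for j
  proof (induction j)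
    case 0 show ?case using linear_id[unfolded id_def] by simp
  next
    case (Suc j) show ?case using linear_compose[OF Suc L] by (simp add: o_def)
  qed
  have bl: "bounded_linear (L^^j)" for j using lin[of j] by (simp add: linear_conv_bounded_linear)
  have "k \<noteq> 0"
  proof
    assume "k = 0"
    have "norm (axis undefined (1::real) :: real^'n) \<le> 1/2 * norm (axis undefined (1::real) :: real^'n)"
      using k[of "axis undefined 1"] \<open>k = 0\<close> by simp
    then show False by simp
  qed
  define N where "N v = (\<Sum>j<k. norm ((L^^j) v))" for v
  define C where "C = max 1 (\<Sum>j<k. onorm (L^^j))"
  define q where "q = 1 - 1 / (2 * C)"
  have C1: "1 \<le> C" by (simp add: C_def)
  have an: "anorm N C"
    unfolding anorm_def
  proof (intro conjI allI)
    fix v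
    have "norm v = norm ((L^^0) v)" by simp
    also have "\<dots> \<le> N v" unfolding N_def using \<open>k \<noteq> 0\<close>
      by (intro member_le_sum) auto
    finally show "norm v \<le> N v" .
    have "N v \<le> (\<Sum>j<k. onorm (L^^j) * norm v)" unfolding N_def
      by (intro sum_mono onorm bl)
    also have "\<dots> = (\<Sum>j<k. onorm (L^^j)) * norm v" by (simp add: sum_distrib_right)
    also have "\<dots> \<le> C * norm v" by (intro mult_right_mono) (auto simp: C_def)
    finally show "N v \<le> C * norm v" .
    show "N (- v) = N v" unfolding N_def using linear_neg[OF lin] by simp
  next
    fix u v
    show "N (u + v) \<le> N u + N v" unfolding N_def sum.distrib[symmetric] using linear_add[OF lin]
      by (intro sum_mono) (simp add: norm_triangle_ineq)
  qed (rule C1)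
  have "N (L v) \<le> q * N v" for v
  proof -
    have "N (L v) = (\<Sum>j<k. norm ((L^^Suc j) v))" unfolding N_def
      by (intro sum.cong refl) (simp only: funpow_Suc_right o_def)
    also have "\<dots> = (\<Sum>j<Suc k. norm ((L^^j) v)) - norm v"
      using sum.lessThan_Suc_shift[of "\<lambda>j. norm ((L^^j) v)" k] by simp
    also have "\<dots> = N v + norm ((L^^k) v) - norm v" by (simp add: N_def)
    also have "\<dots> \<le> N v - 1/2 * norm v" using k[of v] by simp
    also have "\<dots> \<le> N v - 1/(2*C) * N v"
    proof -
      have "N v \<le> C * norm v" using an by (simp add: anorm_def)
      then have "1/(2*C) * N v \<le> 1/(2*C) * (C * norm v)" using C1 by (intro mult_left_mono) auto
      also have "\<dots> = 1/2 * norm v" using C1 by simp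
      finally show ?thesis by simp
    qed
    also have "\<dots> = q * N v" by (simp add: q_def algebra_simps)
    finally show ?thesis .
  qed
  moreover have "0 \<le> q" "q < 1" using C1 by (auto simp: q_def field_simps)
  ultimately show ?thesis using an by blast
qed

lemma partial_deriv:
  fixes f :: "(real^'l) \<times> (real^'m) \<Rightarrow> real^'l"
  assumes fd: "\<And>z. (f has_derivative blinfun_apply (f' z)) (at z)"
  shows "((\<lambda>y. f (y, \<mu>)) has_derivative (\<lambda>v. blinfun_apply (f' (x,\<mu>)) (v,0))) (at x)"
    "Dx f x \<mu> = (\<lambda>v. blinfun_apply (f' (x,\<mu>)) (v,0))"
proof -
  have i: "((\<lambda>y. (y, \<mu>)) has_derivative (\<lambda>v. (v, 0))) (at x)"
    by (intro has_derivative_Pair has_derivative_ident has_derivative_const)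
  from diff_chain_at[OF i fd[of "(x,\<mu>)"]]
  show d: "((\<lambda>y. f (y, \<mu>)) has_derivative (\<lambda>v. blinfun_apply (f' (x,\<mu>)) (v,0))) (at x)"
    by (simp add: o_def)
  show "Dx f x \<mu> = (\<lambda>v. blinfun_apply (f' (x,\<mu>)) (v,0))"
    unfolding Dx_def using frechet_derivative_at[OF d] by simp
qed

lemma local_contr:
  fixes f :: "(real^'l) \<times> (real^'m) \<Rightarrow> real^'l"
  assumes fd: "\<And>z. (f has_derivative blinfun_apply (f' z)) (at z)"
    and fc: "continuous_on UNIV f'"
    and sr: "spectral_radius_r (matrix (Dx f x0 \<mu>0)) < 1"
  shows "\<exists>N C q a \<delta>. anorm N C \<and> 0 \<le> q \<and> q < 1 \<and> 0 < a \<and> 0 < \<delta> \<and>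
     (\<forall>\<mu> x x'. dist \<mu> \<mu>0 < a \<longrightarrow> x \<in> cball x0 \<delta> \<longrightarrow> x' \<in> cball x0 \<delta> \<longrightarrow>
        N (f (x,\<mu>) - f (x',\<mu>)) \<le> q * N (x - x'))"
proof -
  define L where "L = Dx f x0 \<mu>0"
  have Leq: "L = (\<lambda>v. blinfun_apply (f' (x0,\<mu>0)) (v,0))"
    unfolding L_def by (rule partial_deriv(2)[OF fd])
  have bL: "bounded_linear L" unfolding Leq
    by (intro bounded_linear_compose[OF blinfun.bounded_linear_right] bounded_linear_Pair bounded_linear_ident bounded_linear_zero)
  then have lL: "linear L" by (simp add: bounded_linear.linear)
  obtain N C q0 where an: "anorm N C" and q0: "0 \<le> q0" "q0 < 1" and NL: "\<And>v. N (L v) \<le> q0 * N v"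
    using adapted_norm[OF lL sr[folded L_def]] by auto
  have C1: "1 \<le> C" using anormD[OF an] by simp
  define \<eta> where "\<eta> = (1 - q0) / (2 * C)"
  have eta: "0 < \<eta>" using q0 C1 by (simp add: \<eta>_def)
  have "isCont f' (x0,\<mu>0)" using fc by (simp add: continuous_on_eq_continuous_at)
  then obtain d where d: "d > 0" and dd: "\<And>z. dist z (x0,\<mu>0) < d \<Longrightarrow> dist (f' z) (f' (x0,\<mu>0)) < \<eta>"
    using eta unfolding continuous_at_eps_delta by blast
  define \<delta> where "\<delta> = d / 2"
  have key: "N (f (x,\<mu>) - f (x',\<mu>)) \<le> (q0 + C * \<eta>) * N (x - x')"
    if \<mu>: "dist \<mu> \<mu>0 < \<delta>" and x: "x \<in> cball x0 \<delta>" and x': "x' \<in> cball x0 \<delta>" for \<mu> x x'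
  proof -
    define G where "G y = f (y,\<mu>) - L y" for y
    define G' where "G' y = (\<lambda>v. blinfun_apply (f' (y,\<mu>)) (v,0) - L v)" for y
    have Gd: "(G has_derivative G' y) (at y within cball x0 \<delta>)" for y
    proof -
      have "((\<lambda>y. f(y,\<mu>)) has_derivative (\<lambda>v. blinfun_apply (f' (y,\<mu>)) (v,0))) (at y)"
        by (rule partial_deriv(1)[OF fd])
      moreover have "(L has_derivative L) (at y)" by (rule bounded_linear_imp_has_derivative[OF bL])
      ultimately have "(G has_derivative G' y) (at y)" unfolding G_def G'_def by (rule has_derivative_diff)
      then show ?thesis by (rule has_derivative_at_withinI)
    qed
    have Gb: "onorm (G' y) \<le> \<eta>" if y: "y \<in> cball x0 \<delta>" for y
    proof (rule onorm_le)
      fix v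
      have "dist (y,\<mu>) (x0,\<mu>0) \<le> dist y x0 + dist \<mu> \<mu>0"
        unfolding dist_Pair_Pair by (rule order_trans[OF sqrt_sum_squares_le_sum_abs]) simp
      also have "\<dots> < d" using y \<mu> by (simp add: \<delta>_def dist_commute)
      finally have "dist (f' (y,\<mu>)) (f' (x0,\<mu>0)) < \<eta>" by (rule dd)
      then have n: "norm (f' (y,\<mu>) - f' (x0,\<mu>0)) \<le> \<eta>" by (simp add: dist_norm)
      have "G' y v = blinfun_apply (f' (y,\<mu>) - f' (x0,\<mu>0)) (v,0)"
        unfolding G'_def Leq by (simp only: blinfun.diff_left)
      then have "norm (G' y v) \<le> norm (f' (y,\<mu>) - f' (x0,\<mu>0)) * norm (v, 0::real^'m)"
        by (simp only: norm_blinfun)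
      also have "\<dots> \<le> \<eta> * norm v" using n by (simp add: mult_right_mono)
      finally show "norm (G' y v) \<le> \<eta> * norm v" .
    qed
    have Gl: "norm (G x - G x') \<le> \<eta> * norm (x - x')"
      by (rule differentiable_bound[OF convex_cball Gd Gb x x'])
    have "f (x,\<mu>) - f (x',\<mu>) = L (x - x') + (G x - G x')"
      by (simp add: G_def linear_diff[OF lL])
    then have "N (f (x,\<mu>) - f (x',\<mu>)) \<le> N (L (x - x')) + N (G x - G x')"
      using anormD(4)[OF an] by simp
    also have "\<dots> \<le> q0 * N (x - x') + C * (\<eta> * norm (x - x'))"
    proof -
      have "C * norm (G x - G x') \<le> C * (\<eta> * norm (x - x'))" using Gl C1 by (intro mult_left_mono) auto
      then show ?thesis using NL[of "x - x'"] anormD(3)[OF an, of "G x - G x'"] by linarith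
    qed
    also have "\<dots> \<le> q0 * N (x - x') + C * (\<eta> * N (x - x'))"
      using anormD(2)[OF an, of "x - x'"] C1 eta by (simp add: mult_left_mono)
    finally show ?thesis by (simp add: algebra_simps)
  qed
  have "q0 + C * \<eta> < 1" "0 \<le> q0 + C * \<eta>" using q0 C1 eta by (auto simp: \<eta>_def field_simps)
  moreover have "0 < \<delta>" using d by (simp add: \<delta>_def)
  ultimately show ?thesis using an key by blast
qed


definition boxp :: "(real \<Rightarrow> 'a::metric_space \<Rightarrow> bool) \<Rightarrow> real set \<Rightarrow> 'a set \<Rightarrow> (real \<Rightarrow> 'a) \<Rightarrow> bool" where
  "boxp P I V g \<longleftrightarrow> open I \<and> is_interval I \<and> open V \<and> continuous_on I g \<and>
     (\<forall>s\<in>I. g s \<in> V \<and> P s (g s)) \<and> (\<forall>s\<in>I. \<forall>x\<in>V. P s x \<longrightarrow> x = g s)"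

definition goodpts :: "(real \<Rightarrow> 'a::metric_space \<Rightarrow> bool) \<Rightarrow> (real \<times> 'a) set" where
  "goodpts P = {(s,x). \<exists>I V g. boxp P I V g \<and> s \<in> I \<and> x \<in> V \<and> P s x}"

definition branch :: "(real \<Rightarrow> 'a::metric_space \<Rightarrow> bool) \<Rightarrow> real set \<Rightarrow> (real \<Rightarrow> 'a) \<Rightarrow> bool" where
  "branch P J h \<longleftrightarrow> open J \<and> is_interval J \<and> continuous_on J h \<and> (\<forall>t\<in>J. (t, h t) \<in> goodpts P)"

lemma box_branch: "boxp P I V g \<Longrightarrow> branch P I g"
  unfolding branch_def goodpts_def boxp_def by blast

lemma branch_agree:
  assumes b1: "branch P J1 h1" and b2: "branch P J2 h2"
    and t0: "t0 \<in> J1 \<inter> J2" and e: "h1 t0 = h2 t0"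
    and t: "t \<in> J1 \<inter> J2"
  shows "h1 t = h2 t"
proof -
  define K where "K = J1 \<inter> J2"
  have oK: "open K" and cK: "connected K"
    using b1 b2 unfolding K_def branch_def
    by (auto simp: is_interval_connected_1[symmetric] intro: is_interval_Int)
  have c1: "continuous_on K h1" and c2: "continuous_on K h2"
    using b1 b2 unfolding K_def branch_def by (auto intro: continuous_on_subset)
  define A where "A = {t\<in>K. dist (h1 t) (h2 t) = 0}"
  have cl: "closedin (top_of_set K) A"
    unfolding A_def by (intro continuous_closedin_preimage_constant continuous_on_dist c1 c2)
  have op: "openin (top_of_set K) A"
  proof (subst openin_subopen, intro ballI)
    fix t assume tA: "t \<in> A"
    then have tK: "t \<in> K" and ht: "h1 t = h2 t" by (auto simp: A_def)
    have "(t, h1 t) \<in> goodpts P" using b1 tK unfolding branch_def K_def by auto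
    then obtain I V g where bx: "boxp P I V g" and tI: "t \<in> I" and hV: "h1 t \<in> V"
      unfolding goodpts_def by auto
    have oI: "open I" and oV: "open V" using bx by (simp_all add: boxp_def)
    have uniq: "\<And>s x. s \<in> I \<Longrightarrow> x \<in> V \<Longrightarrow> P s x \<Longrightarrow> x = g s" using bx unfolding boxp_def by blast
    define U where "U = (h1 -` V \<inter> K) \<inter> (h2 -` V \<inter> K) \<inter> I"
    have "open (h1 -` V \<inter> K)" using c1 oV unfolding continuous_on_open_vimage[OF oK] by blast
    moreover have "open (h2 -` V \<inter> K)" using c2 oV unfolding continuous_on_open_vimage[OF oK] by blast
    ultimately have oU: "open U" unfolding U_def using oI by auto
    have "U \<subseteq> A"
    proof
      fix u assume u: "u \<in> U"
      then have uK: "u \<in> K" and uI: "u \<in> I" and v1: "h1 u \<in> V" and v2: "h2 u \<in> V"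
        by (auto simp: U_def)
      have "(u, h1 u) \<in> goodpts P" "(u, h2 u) \<in> goodpts P"
        using b1 b2 uK unfolding branch_def K_def by auto
      then have "P u (h1 u)" "P u (h2 u)" unfolding goodpts_def by auto
      then have "h1 u = g u" "h2 u = g u" using uniq[OF uI v1] uniq[OF uI v2] by blast+
      then show "u \<in> A" using uK by (simp add: A_def)
    qed
    moreover have "t \<in> U" using tK tI hV ht by (simp add: U_def)
    moreover have "openin (top_of_set K) U"
    proof -
      have "K \<inter> U = U" by (auto simp: U_def)
      then show ?thesis using openin_open_Int[OF oU, of K] by simp
    qed
    ultimately show "\<exists>T. openin (top_of_set K) T \<and> t \<in> T \<and> T \<subseteq> A" by blast
  qed
  have "A \<noteq> {}" using t0 e by (auto simp: A_def K_def)
  then have "A = K" using cK cl op unfolding connected_clopen by blast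
  then show ?thesis using t by (auto simp: A_def K_def)
qed

lemma graph_continuous:
  fixes X :: "real \<Rightarrow> 'a::metric_space"
  assumes conn: "connected (range (\<lambda>s. (s, X s)))"
    and PX: "\<And>s. P s (X s)"
    and box: "\<And>s0. \<exists>I V g. boxp P I V g \<and> s0 \<in> I \<and> X s0 \<in> V"
  shows "continuous_on UNIV X"
proof -
  define \<Gamma> where "\<Gamma> = range (\<lambda>s. (s, X s))"
  define B where "B = {p\<in>\<Gamma>. \<exists>J h. branch P J h \<and> 0 \<in> J \<and> fst p \<in> J \<and> h 0 = X 0 \<and> h (fst p) = snd p}"
  have boxu: "\<And>s x. boxp P I V g \<Longrightarrow> s \<in> I \<Longrightarrow> x \<in> V \<Longrightarrow> P s x \<Longrightarrow> x = g s" for I V g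
    unfolding boxp_def by blast
  have op: "openin (top_of_set \<Gamma>) B"
  proof (subst openin_subopen, intro ballI)
    fix p assume pB: "p \<in> B"
    then obtain s where ps: "p = (s, X s)" by (auto simp: B_def \<Gamma>_def)
    from pB obtain J h where br: "branch P J h" and J0: "0 \<in> J" "s \<in> J" and h0: "h 0 = X 0" and hs: "h s = X s"
      by (auto simp: B_def ps)
    have "(s, h s) \<in> goodpts P" using br J0 by (auto simp: branch_def)
    then obtain I V g where bx: "boxp P I V g" and sI: "s \<in> I" and hV: "h s \<in> V"
      unfolding goodpts_def by auto
    have oI: "open I" and oV: "open V" using bx by (simp_all add: boxp_def)
    have oJ: "open J" and cJ: "continuous_on J h" using br by (simp_all add: branch_def)
    have "open (h -` V \<inter> J)" using cJ oV unfolding continuous_on_open_vimage[OF oJ] by blast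
    then have oU: "open (((h -` V \<inter> J) \<inter> I) \<times> V)" using oI oV by (intro open_Times open_Int[of "h -` V \<inter> J"])
    define T where "T = \<Gamma> \<inter> (((h -` V \<inter> J) \<inter> I) \<times> V)"
    have "openin (top_of_set \<Gamma>) T" unfolding T_def using oU by (rule openin_open_Int)
    moreover have "p \<in> T" using J0 sI hV hs by (auto simp: T_def ps \<Gamma>_def)
    moreover have "T \<subseteq> B"
    proof
      fix q assume "q \<in> T"
      then obtain t where qt: "q = (t, X t)" and tJ: "t \<in> J" and tI: "t \<in> I" and htV: "h t \<in> V" and XV: "X t \<in> V"
        by (auto simp: T_def \<Gamma>_def)
      have "(t, h t) \<in> goodpts P" using br tJ by (auto simp: branch_def)
      then have "P t (h t)" by (auto simp: goodpts_def)
      then have "h t = g t" using boxu[OF bx tI htV] by blast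
      moreover have "X t = g t" using boxu[OF bx tI XV PX] by blast
      ultimately have "h t = X t" by simp
      then show "q \<in> B" using br J0 h0 tJ unfolding B_def qt \<Gamma>_def by auto
    qed
    ultimately show "\<exists>T. openin (top_of_set \<Gamma>) T \<and> p \<in> T \<and> T \<subseteq> B" by blast
  qed
  have op2: "openin (top_of_set \<Gamma>) (\<Gamma> - B)"
  proof (subst openin_subopen, intro ballI)
    fix p assume pB: "p \<in> \<Gamma> - B"
    then obtain s where ps: "p = (s, X s)" by (auto simp: \<Gamma>_def)
    obtain I V g where bx: "boxp P I V g" and sI: "s \<in> I" and XV: "X s \<in> V" using box by blast
    have oI: "open I" and oV: "open V" and iI: "is_interval I" and cg: "continuous_on I g"
      using bx by (simp_all add: boxp_def)
    define T where "T = \<Gamma> \<inter> (I \<times> V)"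
    have "openin (top_of_set \<Gamma>) T" unfolding T_def using oI oV by (intro openin_open_Int open_Times)
    moreover have "p \<in> T" using sI XV by (auto simp: T_def ps \<Gamma>_def)
    moreover have "T \<subseteq> \<Gamma> - B"
    proof
      fix q assume qT: "q \<in> T"
      then obtain t where qt: "q = (t, X t)" and tI: "t \<in> I" and XtV: "X t \<in> V"
        by (auto simp: T_def \<Gamma>_def)
      show "q \<in> \<Gamma> - B"
      proof
        show "q \<in> \<Gamma>" using qT by (simp add: T_def)
        show "q \<notin> B"
        proof
          assume "q \<in> B"
          then obtain J h where br: "branch P J h" and J0: "0 \<in> J" "t \<in> J" and h0: "h 0 = X 0" and ht: "h t = X t"
            by (auto simp: B_def qt)
          have Xg: "X t = g t" using boxu[OF bx tI XtV PX] by blast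
          have bg: "branch P I g" by (rule box_branch[OF bx])
          have agree: "\<And>u. u \<in> J \<inter> I \<Longrightarrow> h u = g u"
            using branch_agree[OF br bg, of t] J0 tI ht Xg by auto
          define h' where "h' u = (if u \<in> J then h u else g u)" for u
          have oJ: "open J" and iJ: "is_interval J" and cJ: "continuous_on J h" using br by (simp_all add: branch_def)
          have "connected (J \<union> I)"
            using iJ iI J0 tI by (intro connected_Un) (auto simp: is_interval_connected_1[symmetric])
          then have iJI: "is_interval (J \<union> I)" by (simp add: is_interval_connected_1)
          have "continuous_on J h'" using cJ by (rule continuous_on_cong[THEN iffD1, rotated 2]) (auto simp: h'_def)
          moreover have "continuous_on I h'" using cg
            by (rule continuous_on_cong[THEN iffD1, rotated 2]) (auto simp: h'_def agree)
          ultimately have "continuous_on (J \<union> I) h'" using oJ oI by (intro continuous_on_open_Un)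
          moreover have "\<forall>u\<in>J \<union> I. (u, h' u) \<in> goodpts P"
            using br bg unfolding branch_def h'_def by auto
          ultimately have "branch P (J \<union> I) h'" using oJ oI iJI by (simp add: branch_def open_Un)
          moreover have "h' 0 = X 0" using J0 h0 by (simp add: h'_def)
          moreover have "h' s = X s"
          proof -
            have "X s = g s" using boxu[OF bx sI XV PX] by blast
            then show ?thesis using agree sI by (auto simp: h'_def)
          qed
          ultimately have "p \<in> B" using pB J0 sI unfolding B_def ps by auto
          then show False using pB by simp
        qed
      qed
    qed
    ultimately show "\<exists>T. openin (top_of_set \<Gamma>) T \<and> p \<in> T \<and> T \<subseteq> \<Gamma> - B" by blast
  qed
  have cl: "closedin (top_of_set \<Gamma>) B"
    using op2 unfolding closedin_def by (auto simp: B_def)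
  have "(0, X 0) \<in> B"
  proof -
    obtain I V g where bx: "boxp P I V g" and sI: "0 \<in> I" and XV: "X 0 \<in> V" using box by blast
    have "X 0 = g 0" using boxu[OF bx sI XV PX] by blast
    then show ?thesis using box_branch[OF bx] sI unfolding B_def \<Gamma>_def by auto
  qed
  then have BG: "B = \<Gamma>" using conn op cl unfolding connected_clopen \<Gamma>_def[symmetric] by blast
  have "isCont X s0" for s0
  proof -
    have "(s0, X s0) \<in> B" using BG by (auto simp: \<Gamma>_def)
    then obtain J h where br: "branch P J h" and J0: "0 \<in> J" "s0 \<in> J" and h0: "h 0 = X 0"
      by (auto simp: B_def)
    have eq: "h t = X t" if tJ: "t \<in> J" for t
    proof -
      have "(t, X t) \<in> B" using BG by (auto simp: \<Gamma>_def)
      then obtain J' h' where br': "branch P J' h'" and J0': "0 \<in> J'" "t \<in> J'" and h0': "h' 0 = X 0" and ht: "h' t = X t"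
        by (auto simp: B_def)
      have "h t = h' t" using branch_agree[OF br br', of 0 t] J0 J0' h0 h0' tJ by auto
      then show ?thesis using ht by simp
    qed
    have oJ: "open J" and cJ: "continuous_on J h" using br by (simp_all add: branch_def)
    have "continuous_on J X" using cJ by (rule continuous_on_cong[THEN iffD1, rotated 2]) (auto simp: eq)
    then show ?thesis using oJ J0 by (simp add: continuous_on_eq_continuous_at)
  qed
  then show ?thesis by (simp add: continuous_at_imp_continuous_on)
qed


lemma geom_convergent:
  fixes z :: "nat \<Rightarrow> 'a::banach"
  assumes d: "\<And>k. norm (z (Suc k) - z k) \<le> B * q^k" and q: "0 \<le> q" "q < 1"
  shows "convergent z"
proof -
  have sg: "summable (\<lambda>k. B * q^k)" using q by (intro summable_mult summable_geometric) simp
  have "summable (\<lambda>k. z (Suc k) - z k)"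
    by (rule summable_comparison_test'[OF sg d])
  from summable_LIMSEQ[OF this]
  have "(\<lambda>n. z n - z 0) \<longlonglongrightarrow> (\<Sum>k. z (Suc k) - z k)" by (simp add: sum_lessThan_telescope)
  then have "(\<lambda>n. (z n - z 0) + z 0) \<longlonglongrightarrow> (\<Sum>k. z (Suc k) - z k) + z 0" by (intro tendsto_add) auto
  then show ?thesis unfolding convergent_def by auto
qed

lemma box_exists:
  fixes f :: "(real^'l) \<times> (real^'m) \<Rightarrow> real^'l" and Lam :: "real \<Rightarrow> real^'m"
  assumes fd: "\<And>z. (f has_derivative blinfun_apply (f' z)) (at z)"
    and fc': "continuous_on UNIV f'"
    and fcont: "continuous_on UNIV f"
    and Lc: "continuous_on UNIV Lam"
    and fix0: "f (x0, Lam s0) = x0"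
    and sr: "spectral_radius_r (matrix (Dx f x0 (Lam s0))) < 1"
  shows "\<exists>I V g. boxp (\<lambda>s x. f (x, Lam s) = x) I V g \<and> s0 \<in> I \<and> x0 \<in> V"
proof -
  obtain N C q a \<delta> where an: "anorm N C" and q: "0 \<le> q" "q < 1" and a: "0 < a" and \<delta>: "0 < \<delta>"
    and contr: "\<And>\<mu> x x'. dist \<mu> (Lam s0) < a \<Longrightarrow> x \<in> cball x0 \<delta> \<Longrightarrow> x' \<in> cball x0 \<delta> \<Longrightarrow>
        N (f (x,\<mu>) - f (x',\<mu>)) \<le> q * N (x - x')"
    using local_contr[OF fd fc' sr] by blast
  note aD = anormD[OF an]
  have C1: "1 \<le> C" using aD by simp
  have fC: "isCont f z" for z using fcont unfolding continuous_on_eq_continuous_at[OF open_UNIV] by blast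
  have LC: "isCont Lam s" for s using Lc unfolding continuous_on_eq_continuous_at[OF open_UNIV] by blast
  define \<epsilon>1 where "\<epsilon>1 = (1 - q) * \<delta> / (2 * C)"
  have e1: "0 < \<epsilon>1" using q \<delta> C1 by (simp add: \<epsilon>1_def)
  have "isCont (\<lambda>s. (x0, Lam s)) s0" using LC by (intro continuous_intros)
  then have "isCont (\<lambda>s. f (x0, Lam s)) s0" using fC by (rule continuous_at_compose[unfolded o_def])
  then obtain a1 where a1: "a1 > 0" and a1d: "\<And>s. dist s s0 < a1 \<Longrightarrow> dist (f (x0, Lam s)) (f (x0, Lam s0)) < \<epsilon>1"
    using e1 unfolding continuous_at_eps_delta by blast
  obtain a2 where a2: "a2 > 0" and a2d: "\<And>s. dist s s0 < a2 \<Longrightarrow> dist (Lam s) (Lam s0) < a"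
    using LC[of s0] a unfolding continuous_at_eps_delta by blast
  define a' where "a' = min a1 a2"
  define I where "I = ball s0 a'"
  define V where "V = ball x0 \<delta>"
  have sI: "dist (Lam s) (Lam s0) < a \<and> norm (f (x0, Lam s) - x0) < \<epsilon>1" if "s \<in> I" for s
    using that a1d[of s] a2d[of s] fix0 by (auto simp: I_def a'_def dist_commute dist_norm norm_minus_commute)
  have ct: "N (f (x, Lam s) - f (x', Lam s)) \<le> q * N (x - x')"
    if "s \<in> I" "x \<in> cball x0 \<delta>" "x' \<in> cball x0 \<delta>" for s x x'
    using contr sI that by blast
  have uniq: "x = x'" if "s \<in> I" "x \<in> cball x0 \<delta>" "x' \<in> cball x0 \<delta>"
      "f (x, Lam s) = x" "f (x', Lam s) = x'" for s x x'
  proof -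
    have "N (x - x') \<le> q * N (x - x')" using ct[OF that(1-3)] that(4,5) by simp
    then have "N (x - x') \<le> 0" using q aD(7)[of "x - x'"]
      by (metis diff_ge_0_iff_ge le_diff_eq mult_le_cancel_right1 not_le order_le_less_trans)
    then have "norm (x - x') \<le> 0" using aD(2)[of "x - x'"] by linarith
    then show ?thesis by simp
  qed
  have ex: "\<exists>x. x \<in> cball x0 (\<delta>/2) \<and> f (x, Lam s) = x" if sI': "s \<in> I" for s
  proof -
    define T where "T x = f (x, Lam s)" for x
    define z where "z k = (T^^k) x0" for k
    have Nz: "N (z k - x0) \<le> \<delta>/2" for k
    proof (induction k)
      case 0
      have "N (z 0 - x0) \<le> C * norm (z 0 - x0)" by (rule aD(3))
      then show ?case using \<delta> by (simp add: z_def)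
    next
      case (Suc k)
      have zc: "z k \<in> cball x0 \<delta>" using aD(2)[of "z k - x0"] Suc \<delta>
        by (simp add: dist_norm norm_minus_commute)
      have eq: "z (Suc k) - x0 = (T (z k) - T x0) + (T x0 - x0)" by (simp add: z_def)
      have "N (z (Suc k) - x0) \<le> N (T (z k) - T x0) + N (T x0 - x0)" unfolding eq by (rule aD(4))
      also have "\<dots> \<le> q * N (z k - x0) + C * norm (T x0 - x0)"
        using ct[OF sI' zc, of x0] aD(3)[of "T x0 - x0"] \<delta> by (simp add: T_def add_mono)
      also have "\<dots> \<le> q * (\<delta>/2) + C * \<epsilon>1"
        using Suc q sI[OF sI'] C1 by (intro add_mono mult_left_mono) (auto simp: T_def)
      also have "\<dots> = \<delta>/2" using C1 by (simp add: \<epsilon>1_def field_simps)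
      finally show ?case .
    qed
    have zc: "z k \<in> cball x0 \<delta>" for k using aD(2)[of "z k - x0"] Nz[of k] \<delta>
      by (simp add: dist_norm norm_minus_commute)
    have zc2: "norm (z k - x0) \<le> \<delta>/2" for k using aD(2)[of "z k - x0"] Nz[of k] by linarith
    have Nd: "N (z (Suc k) - z k) \<le> q^k * (\<delta>/2)" for k
    proof (induction k)
      case 0
      have "N (z 1 - z 0) = N (z 1 - x0)" by (simp add: z_def)
      then show ?case using Nz[of 1] by simp
    next
      case (Suc k)
      have "N (z (Suc (Suc k)) - z (Suc k)) = N (T (z (Suc k)) - T (z k))" by (simp add: z_def)
      also have "\<dots> \<le> q * N (z (Suc k) - z k)" using ct[OF sI' zc zc] by (simp add: T_def)
      also have "\<dots> \<le> q * (q^k * (\<delta>/2))" using Suc q by (intro mult_left_mono) auto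
      finally show ?case by simp
    qed
    have "norm (z (Suc k) - z k) \<le> (\<delta>/2) * q^k" for k
      using aD(2)[of "z (Suc k) - z k"] Nd[of k] by (simp add: mult.commute)
    from geom_convergent[OF this q] obtain zs where zs: "z \<longlonglongrightarrow> zs" by (auto simp: convergent_def)
    have "norm (zs - x0) \<le> \<delta>/2"
    proof (rule tendsto_upperbound)
      show "((\<lambda>k. norm (z k - x0)) \<longlongrightarrow> norm (zs - x0)) sequentially" using zs by (intro tendsto_intros)
    qed (use zc2 in auto)
    moreover have "f (zs, Lam s) = zs"
    proof -
      have "isCont (\<lambda>x. (x, Lam s)) zs" by (intro continuous_intros)
      from continuous_at_compose[OF this fC] have "isCont T zs" unfolding T_def by (simp add: o_def)
      then have "(\<lambda>k. T (z k)) \<longlonglongrightarrow> T zs" using zs by (rule isCont_tendsto_compose)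
      moreover have "(\<lambda>k. T (z k)) \<longlonglongrightarrow> zs" using zs LIMSEQ_Suc[OF zs] by (simp add: z_def)
      ultimately have "T zs = zs" by (rule LIMSEQ_unique)
      then show ?thesis by (simp add: T_def)
    qed
    ultimately show ?thesis by (auto simp: dist_norm norm_minus_commute)
  qed
  define g where "g s = (SOME x. x \<in> cball x0 (\<delta>/2) \<and> f (x, Lam s) = x)" for s
  have g: "g s \<in> cball x0 (\<delta>/2) \<and> f (g s, Lam s) = g s" if "s \<in> I" for s
    unfolding g_def using someI_ex[OF ex[OF that]] .
  have gc: "g s \<in> cball x0 \<delta>" if "s \<in> I" for s using g[OF that] \<delta> by auto
  have gcont: "continuous_on I g"
  proof -
    have "isCont g s" if sI': "s \<in> I" for s
    proof -
      have bnd: "norm (g s' - g s) \<le> C / (1 - q) * norm (f (g s, Lam s') - f (g s, Lam s))" if s'I: "s' \<in> I" for s'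
      proof -
        have eq: "g s' - g s = (f (g s', Lam s') - f (g s, Lam s')) + (f (g s, Lam s') - f (g s, Lam s))"
          using g[OF sI'] g[OF s'I] by simp
        have "N (g s' - g s) \<le> N (f (g s', Lam s') - f (g s, Lam s')) + N (f (g s, Lam s') - f (g s, Lam s))"
          unfolding eq by (rule aD(4))
        also have "\<dots> \<le> q * N (g s' - g s) + C * norm (f (g s, Lam s') - f (g s, Lam s))"
          using ct[OF s'I gc[OF s'I] gc[OF sI']] aD(3) by (intro add_mono) auto
        finally have "(1 - q) * N (g s' - g s) \<le> C * norm (f (g s, Lam s') - f (g s, Lam s))"
          by (simp add: algebra_simps)
        then have "N (g s' - g s) \<le> C / (1 - q) * norm (f (g s, Lam s') - f (g s, Lam s))"
          using q by (simp add: field_simps)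
        then show ?thesis using aD(2)[of "g s' - g s"] by linarith
      qed
      have "isCont (\<lambda>s'. (g s, Lam s')) s" using LC by (intro continuous_intros) auto
      from continuous_at_compose[OF this fC] have "isCont (\<lambda>s'. f (g s, Lam s')) s" by (simp add: o_def)
      then have "((\<lambda>s'. f (g s, Lam s') - f (g s, Lam s)) \<longlongrightarrow> 0) (at s)"
        unfolding isCont_def by (simp add: LIM_zero)
      then have "((\<lambda>s'. C / (1 - q) * norm (f (g s, Lam s') - f (g s, Lam s))) \<longlongrightarrow> 0) (at s)"
        by (intro tendsto_mult_right_zero tendsto_norm_zero)
      moreover have evI: "eventually (\<lambda>s'. s' \<in> I) (at s)"
        using sI' by (intro eventually_at_in_open') (auto simp: I_def)
      have ev1: "eventually (\<lambda>s'. norm (g s' - g s) \<le> C / (1 - q) * norm (f (g s, Lam s') - f (g s, Lam s))) (at s)"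
        by (rule eventually_mono[OF evI bnd])
      note ev = ev1 calculation
      have "((\<lambda>s'. g s' - g s) \<longlongrightarrow> 0) (at s)" by (rule Lim_null_comparison[OF ev])
      then show ?thesis unfolding isCont_def by (rule LIM_zero_cancel)
    qed
    then show ?thesis by (simp add: continuous_at_imp_continuous_on)
  qed
  have "boxp (\<lambda>s x. f (x, Lam s) = x) I V g"
    unfolding boxp_def
  proof (intro conjI ballI impI)
    show "open I" "is_interval I" "open V" by (simp_all add: I_def V_def is_interval_ball_real)
    show "continuous_on I g" by (rule gcont)
  next
    fix s assume sI'': "s \<in> I"
    have "dist x0 (g s) \<le> \<delta>/2" "f (g s, Lam s) = g s" using g[OF sI''] by auto
    then show "g s \<in> V" "f (g s, Lam s) = g s" using \<delta> by (auto simp: V_def)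
  next
    fix s x assume sI': "s \<in> I" and xV: "x \<in> V" and fx: "f (x, Lam s) = x"
    have "x \<in> cball x0 \<delta>" using xV by (simp add: V_def)
    from uniq[OF sI' this gc[OF sI'] fx] g[OF sI'] show "x = g s" by simp
  qed
  moreover have "s0 \<in> I" "x0 \<in> V" using a1 a2 \<delta> by (auto simp: I_def V_def a'_def)
  ultimately show ?thesis by blast
qed


definition goodset :: "((real^'l) \<times> (real^'m) \<Rightarrow> real^'l) \<Rightarrow> (real \<Rightarrow> real^'m) \<Rightarrow> (real \<Rightarrow> real^'l)
   \<Rightarrow> real set \<Rightarrow> (real^'l \<Rightarrow> real) \<Rightarrow> real \<Rightarrow> real \<Rightarrow> real \<Rightarrow> bool" where
  "goodset f Lam X S N C q \<delta> \<longleftrightarrow> anorm N C \<and> 0 \<le> q \<and> q < 1 \<and> 0 < \<delta> \<and>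
     (\<forall>s\<in>S. \<forall>x x'. norm (x - X s) \<le> \<delta> \<longrightarrow> norm (x' - X s) \<le> \<delta> \<longrightarrow>
        N (f (x, Lam s) - f (x', Lam s)) \<le> q * N (x - x'))"

lemma goodset_mono: "goodset f Lam X S N C q \<delta> \<Longrightarrow> S' \<subseteq> S \<Longrightarrow> goodset f Lam X S' N C q \<delta>"
  unfolding goodset_def by blast

lemma anorm_norm: "anorm (norm :: real^'n \<Rightarrow> real) 1"
  unfolding anorm_def by (auto simp: norm_triangle_ineq)

lemma goodset_empty: "goodset f Lam X {} norm 1 0 1"
  unfolding goodset_def using anorm_norm by auto

lemma good_from:
  fixes f :: "(real^'l) \<times> (real^'m) \<Rightarrow> real^'l"
  assumes an: "anorm N C" and q: "0 \<le> q" "q < 1" and \<delta>: "0 < \<delta>"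
    and contr: "\<forall>\<mu> x x'. dist \<mu> \<mu>0 < a \<longrightarrow> x \<in> cball x0 \<delta> \<longrightarrow> x' \<in> cball x0 \<delta> \<longrightarrow>
        N (f (x,\<mu>) - f (x',\<mu>)) \<le> q * N (x - x')"
    and S: "\<And>s. s \<in> S \<Longrightarrow> dist (Lam s) \<mu>0 < a \<and> norm (X s - x0) \<le> \<delta>/2"
  shows "goodset f Lam X S N C q (\<delta>/2)"
  unfolding goodset_def
proof (intro conjI ballI allI impI)
  fix s x x' assume s: "s \<in> S" and x: "norm (x - X s) \<le> \<delta>/2" and x': "norm (x' - X s) \<le> \<delta>/2"
  have "norm (x - x0) \<le> \<delta>" using x S[OF s] norm_triangle_ineq[of "x - X s" "X s - x0"] by simp
  then have xc: "x \<in> cball x0 \<delta>" by (simp add: dist_norm norm_minus_commute)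
  have "norm (x' - x0) \<le> \<delta>" using x' S[OF s] norm_triangle_ineq[of "x' - X s" "X s - x0"] by simp
  then have xc': "x' \<in> cball x0 \<delta>" by (simp add: dist_norm norm_minus_commute)
  show "N (f (x, Lam s) - f (x', Lam s)) \<le> q * N (x - x')" using contr S[OF s] xc xc' by blast
qed (use an q \<delta> in auto)

lemma tracking:
  fixes e :: "int \<Rightarrow> real^'l" and idx :: "int \<Rightarrow> nat"
  assumes mono: "\<And>n. idx n \<le> idx (n+1)"
    and bnd: "\<And>n. idx n \<le> K"
    and an: "\<And>i. i \<le> K \<Longrightarrow> anorm (Nf i) (Cf i)"
    and chain: "\<And>i j. i < j \<Longrightarrow> j \<le> K \<Longrightarrow> Rad i * Cf j \<le> Rad j"
    and step: "\<And>n. n \<ge> nst \<Longrightarrow> Nf (idx n) (e n) \<le> Rad (idx n) \<Longrightarrow> Nf (idx n) (e (n+1)) \<le> Rad (idx n)"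
    and start: "Nf (idx nst) (e nst) \<le> Rad (idx nst)"
  shows "\<And>n. n \<ge> nst \<Longrightarrow> Nf (idx n) (e n) \<le> Rad (idx n)"
proof -
  fix n show "n \<ge> nst \<Longrightarrow> Nf (idx n) (e n) \<le> Rad (idx n)"
  proof (induction n rule: int_ge_induct)
    case base then show ?case by (rule start)
  next
    case (step n)
    define i where "i = idx n"
    define j where "j = idx (n+1)"
    have s: "Nf i (e (n+1)) \<le> Rad i" using assms(5)[OF step(1) step(2)] by (simp add: i_def)
    have "i \<le> j" using mono by (simp add: i_def j_def)
    show ?case
    proof (cases "i = j")
      case True then show ?thesis using s by (simp add: j_def)
    next
      case False
      then have ij: "i < j" using \<open>i \<le> j\<close> by simp
      have jK: "j \<le> K" "i \<le> K" using bnd by (auto simp: i_def j_def)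
      have "norm (e (n+1)) \<le> Rad i" using anormD(2)[OF an[OF jK(2)]] s by (rule order_trans)
      then have "Cf j * norm (e (n+1)) \<le> Cf j * Rad i"
        using anormD(1)[OF an[OF jK(1)]] by (intro mult_left_mono) auto
      then have "Nf j (e (n+1)) \<le> Rad i * Cf j" using anormD(3)[OF an[OF jK(1)], of "e (n+1)"] by (simp add: mult.commute)
      also have "\<dots> \<le> Rad j" by (rule chain[OF ij jK(1)])
      finally show ?thesis by (simp add: j_def)
    qed
  qed
qed

lemma unif_drift:
  fixes X :: "real \<Rightarrow> real^'l"
  assumes Xc: "continuous_on UNIV X" and Xp: "(X \<longlongrightarrow> Xp) at_top" and Xm: "(X \<longlongrightarrow> Xm) at_bot"
    and D: "D > 0"
  shows "\<exists>r0>0. \<forall>s s'. \<bar>s - s'\<bar> \<le> r0 \<longrightarrow> norm (X s - X s') \<le> D"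
proof -
  have "eventually (\<lambda>s. dist (X s) Xp < D/2) at_top" using Xp D by (intro tendstoD) auto
  then obtain T2 where T2: "\<And>s. s \<ge> T2 \<Longrightarrow> dist (X s) Xp < D/2" by (auto simp: eventually_at_top_linorder)
  have "eventually (\<lambda>s. dist (X s) Xm < D/2) at_bot" using Xm D by (intro tendstoD) auto
  then obtain T3 where T3: "\<And>s. s \<le> T3 \<Longrightarrow> dist (X s) Xm < D/2" by (auto simp: eventually_at_bot_linorder)
  define K where "K = {T3 - 1 .. T2 + 1}"
  have "uniformly_continuous_on K X"
    by (rule compact_uniformly_continuous[OF continuous_on_subset[OF Xc]]) (auto simp: K_def)
  then obtain d where d: "d > 0" and dd: "\<And>x x'. x \<in> K \<Longrightarrow> x' \<in> K \<Longrightarrow> dist x' x < d \<Longrightarrow> dist (X x') (X x) < D"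
    using D unfolding uniformly_continuous_on_def by metis
  define r0 where "r0 = min 1 (d/2)"
  have "norm (X s - X s') \<le> D" if ss: "\<bar>s - s'\<bar> \<le> r0" for s s'
  proof (cases "s \<in> K \<and> s' \<in> K")
    case True
    have "\<bar>s' - s\<bar> < d" using ss d abs_minus_commute[of s s'] by (auto simp: r0_def)
    then have "dist s' s < d" by (simp add: dist_real_def)
    then show ?thesis using dd[of s s'] True by (simp add: dist_norm norm_minus_commute)
  next
    case False
    then have "(s \<ge> T2 \<and> s' \<ge> T2) \<or> (s \<le> T3 \<and> s' \<le> T3)" using ss by (auto simp: K_def r0_def)
    then show ?thesis
    proof
      assume "s \<ge> T2 \<and> s' \<ge> T2"
      then have "dist (X s) Xp < D/2" "dist (X s') Xp < D/2" using T2 by auto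
      then have "dist (X s) (X s') < D" by (rule dist_triangle_half_l)
      then show ?thesis by (simp add: dist_norm)
    next
      assume "s \<le> T3 \<and> s' \<le> T3"
      then have "dist (X s) Xm < D/2" "dist (X s') Xm < D/2" using T3 by auto
      then have "dist (X s) (X s') < D" by (rule dist_triangle_half_l)
      then show ?thesis by (simp add: dist_norm)
    qed
  qed
  moreover have "r0 > 0" using d by (simp add: r0_def)
  ultimately show ?thesis by blast
qed

primrec itsol :: "((real^'l) \<times> (real^'m) \<Rightarrow> real^'l) \<Rightarrow> (real \<Rightarrow> real^'m) \<Rightarrow> real \<Rightarrow> real^'l \<Rightarrow> int \<Rightarrow> nat \<Rightarrow> real^'l" where
  "itsol f Lam r x0 n0 0 = x0"
| "itsol f Lam r x0 n0 (Suc k) = f (itsol f Lam r x0 n0 k, Lam (r * of_int (n0 + int k)))"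

theorem mainTheorem3:
  fixes f :: "(real^'l) \<times> (real^'m) \<Rightarrow> real^'l"
    and Lam :: "real \<Rightarrow> real^'m"
    and lm lp :: "real^'m"
    and X :: "real \<Rightarrow> real^'l"
    and \<epsilon> :: real
  assumes "C1_map f"
    and "parameter_shift Lam lm lp"
    and "stable_path f Lam lm lp X"
    and "\<epsilon> > 0"
  shows "\<exists>r0>0. \<forall>r. 0 < r \<and> r < r0 \<longrightarrow>
           (\<exists>y. is_solution f Lam r y \<and> (\<forall>n::int. norm (y n - X (r * of_int n)) < \<epsilon>))"
proof -
  note C1 = assms(1) and PS = assms(2) and SP = assms(3) and eps = assms(4)
  obtain f' :: "(real^'l) \<times> (real^'m) \<Rightarrow> ((real^'l) \<times> (real^'m)) \<Rightarrow>\<^sub>L (real^'l)"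
    where fd: "\<And>z. (f has_derivative blinfun_apply (f' z)) (at z)" and fc': "continuous_on UNIV f'"
    using C1 unfolding C1_map_def by blast
  have fcont: "continuous_on UNIV f"
    using has_derivative_continuous[OF fd] by (simp add: continuous_at_imp_continuous_on)
  obtain Lam' where Ld: "\<And>s. (Lam has_vector_derivative Lam' s) (at s)"
    and LamP: "(Lam \<longlongrightarrow> lp) at_top" and LamM: "(Lam \<longlongrightarrow> lm) at_bot"
    using PS unfolding parameter_shift_def by blast
  have Lc: "continuous_on UNIV Lam"
    using has_vector_derivative_continuous[OF Ld] by (simp add: continuous_at_imp_continuous_on)
  have fixX: "\<And>s. f (X s, Lam s) = X s" and conn: "connected (range (\<lambda>s. (s, X s)))"
    using SP unfolding stable_path_def is_fixed_point_def by blast+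
  obtain Xm Xp where XP: "(X \<longlongrightarrow> Xp) at_top" and XM: "(X \<longlongrightarrow> Xm) at_bot"
    and fixP: "f (Xp, lp) = Xp" and fixM: "f (Xm, lm) = Xm"
    and srs: "\<And>s. spectral_radius_r (matrix (Dx f (X s) (Lam s))) < 1"
    and srP: "spectral_radius_r (matrix (Dx f Xp lp)) < 1"
    and srM: "spectral_radius_r (matrix (Dx f Xm lm)) < 1"
    using SP unfolding stable_path_def is_fixed_point_def by blast
  have Xc: "continuous_on UNIV X"
  proof (rule graph_continuous[OF conn, of "\<lambda>s x. f (x, Lam s) = x"])
    show "\<And>s. f (X s, Lam s) = X s" by (rule fixX)
    show "\<exists>I V g. boxp (\<lambda>s x. f (x, Lam s) = x) I V g \<and> s0 \<in> I \<and> X s0 \<in> V" for s0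
      by (rule box_exists[OF fd fc' fcont Lc fixX srs])
  qed
  have XC: "isCont X s" for s using Xc unfolding continuous_on_eq_continuous_at[OF open_UNIV] by blast
  have LC: "isCont Lam s" for s using Lc unfolding continuous_on_eq_continuous_at[OF open_UNIV] by blast
  have loc: "\<exists>a>0. \<exists>N C q \<delta>. goodset f Lam X (ball s0 a) N C q \<delta>" for s0
  proof -
    obtain N C q a \<delta> where an: "anorm N C" and q: "0 \<le> q" "q < 1" and a: "0 < a" and \<delta>: "0 < \<delta>"
      and contr: "\<forall>\<mu> x x'. dist \<mu> (Lam s0) < a \<longrightarrow> x \<in> cball (X s0) \<delta> \<longrightarrow> x' \<in> cball (X s0) \<delta> \<longrightarrow>
        N (f (x,\<mu>) - f (x',\<mu>)) \<le> q * N (x - x')"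
      using local_contr[OF fd fc' srs[of s0]] by blast
    obtain a1 where a1: "a1 > 0" and a1d: "\<And>s. dist s s0 < a1 \<Longrightarrow> dist (Lam s) (Lam s0) < a"
      using LC[of s0] a unfolding continuous_at_eps_delta by blast
    obtain a2 where a2: "a2 > 0" and a2d: "\<And>s. dist s s0 < a2 \<Longrightarrow> dist (X s) (X s0) < \<delta>/2"
      using XC[of s0] \<delta> unfolding continuous_at_eps_delta by (metis half_gt_zero)
    have S: "dist (Lam s) (Lam s0) < a \<and> norm (X s - X s0) \<le> \<delta>/2" if "s \<in> ball s0 (min a1 a2)" for s
    proof -
      have "dist s s0 < a1" "dist s s0 < a2" using that by (auto simp: dist_commute)
      then show ?thesis using a1d a2d[of s] by (simp add: dist_norm less_imp_le)
    qed
    have "goodset f Lam X (ball s0 (min a1 a2)) N C q (\<delta>/2)"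
      by (rule good_from[OF an q \<delta> contr S])
    moreover have "min a1 a2 > 0" using a1 a2 by simp
    ultimately show ?thesis by blast
  qed
  have locP: "\<exists>T. \<exists>N C q \<delta>. goodset f Lam X {T..} N C q \<delta>"
  proof -
    obtain N C q a \<delta> where an: "anorm N C" and q: "0 \<le> q" "q < 1" and a: "0 < a" and \<delta>: "0 < \<delta>"
      and contr: "\<forall>\<mu> x x'. dist \<mu> lp < a \<longrightarrow> x \<in> cball Xp \<delta> \<longrightarrow> x' \<in> cball Xp \<delta> \<longrightarrow>
        N (f (x,\<mu>) - f (x',\<mu>)) \<le> q * N (x - x')"
      using local_contr[OF fd fc' srP] by blast
    have "eventually (\<lambda>s. dist (Lam s) lp < a) at_top" using LamP a by (rule tendstoD)
    moreover have "eventually (\<lambda>s. dist (X s) Xp < \<delta>/2) at_top" using XP \<delta> by (intro tendstoD) auto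
    ultimately have "eventually (\<lambda>s. dist (Lam s) lp < a \<and> dist (X s) Xp < \<delta>/2) at_top"
      by (rule eventually_conj)
    then obtain T where T: "\<And>s. s \<ge> T \<Longrightarrow> dist (Lam s) lp < a \<and> dist (X s) Xp < \<delta>/2"
      by (auto simp: eventually_at_top_linorder)
    have "goodset f Lam X {T..} N C q (\<delta>/2)"
      by (rule good_from[OF an q \<delta> contr]) (use T in \<open>auto simp: dist_norm intro: less_imp_le\<close>)
    then show ?thesis by blast
  qed
  have locM: "\<exists>T. \<exists>N C q \<delta>. goodset f Lam X {..T} N C q \<delta>"
  proof -
    obtain N C q a \<delta> where an: "anorm N C" and q: "0 \<le> q" "q < 1" and a: "0 < a" and \<delta>: "0 < \<delta>"
      and contr: "\<forall>\<mu> x x'. dist \<mu> lm < a \<longrightarrow> x \<in> cball Xm \<delta> \<longrightarrow> x' \<in> cball Xm \<delta> \<longrightarrow>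
        N (f (x,\<mu>) - f (x',\<mu>)) \<le> q * N (x - x')"
      using local_contr[OF fd fc' srM] by blast
    have "eventually (\<lambda>s. dist (Lam s) lm < a) at_bot" using LamM a by (rule tendstoD)
    moreover have "eventually (\<lambda>s. dist (X s) Xm < \<delta>/2) at_bot" using XM \<delta> by (intro tendstoD) auto
    ultimately have "eventually (\<lambda>s. dist (Lam s) lm < a \<and> dist (X s) Xm < \<delta>/2) at_bot"
      by (rule eventually_conj)
    then obtain T where T: "\<And>s. s \<le> T \<Longrightarrow> dist (Lam s) lm < a \<and> dist (X s) Xm < \<delta>/2"
      by (auto simp: eventually_at_bot_linorder)
    have "goodset f Lam X {..T} N C q (\<delta>/2)"
      by (rule good_from[OF an q \<delta> contr]) (use T in \<open>auto simp: dist_norm intro: less_imp_le\<close>)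
    then show ?thesis by blast
  qed
  obtain TP NP CP qP \<delta>P where gP: "goodset f Lam X {TP..} NP CP qP \<delta>P" using locP by blast
  obtain TM NM CM qM \<delta>M where gM: "goodset f Lam X {..TM} NM CM qM \<delta>M" using locM by blast
  define T1 where "T1 = max 1 (max TP (- TM))"
  have T1: "T1 > 0" by (simp add: T1_def)
  have gP1: "goodset f Lam X {T1..} NP CP qP \<delta>P" by (rule goodset_mono[OF gP]) (auto simp: T1_def)
  have gM1: "goodset f Lam X {..-T1} NM CM qM \<delta>M" by (rule goodset_mono[OF gM]) (auto simp: T1_def)
  \<comment> \<open>Lebesgue number\<close>
  define GG where "GG = {ball s0 a |s0 a. a > 0 \<and> (\<exists>N C q \<delta>. goodset f Lam X (ball s0 a) N C q \<delta>)}"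
  have "{-T1..T1} \<subseteq> \<Union>GG"
  proof
    fix s assume "s \<in> {-T1..T1}"
    obtain a where a: "a > 0" "\<exists>N C q \<delta>. goodset f Lam X (ball s a) N C q \<delta>" using loc by blast
    then have "ball s a \<in> GG" unfolding GG_def by blast
    moreover have "s \<in> ball s a" using a by simp
    ultimately show "s \<in> \<Union>GG" by blast
  qed
  moreover have opG: "\<And>G. G \<in> GG \<Longrightarrow> open G" by (auto simp: GG_def)
  ultimately obtain e where e: "e > 0" and eG: "\<And>x. x \<in> {-T1..T1} \<Longrightarrow> \<exists>G\<in>GG. ball x e \<subseteq> G"
    using Heine_Borel_lemma[OF compact_Icc] by metis
  have locE: "\<exists>N C q \<delta>. goodset f Lam X (ball c e) N C q \<delta>" if cT: "c \<in> {-T1..T1}" for c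
  proof -
    obtain G where "G \<in> GG" "ball c e \<subseteq> G" using eG[OF cT] by blast
    then obtain s0 a N C q \<delta> where "ball c e \<subseteq> ball s0 a" "goodset f Lam X (ball s0 a) N C q \<delta>"
      unfolding GG_def by blast
    then show ?thesis using goodset_mono by blast
  qed

  define M :: nat where "M = nat \<lceil>2*T1/e\<rceil> + 1"
  define h where "h = 2*T1 / real M"
  have M1: "M \<ge> 1" by (simp add: M_def)
  have hpos: "h > 0" using T1 M1 by (simp add: h_def)
  have he: "h < e"
  proof -
    have "2*T1/e \<le> real (nat \<lceil>2*T1/e\<rceil>)" by linarith
    then have "2*T1/e < real M" by (simp add: M_def)
    then have "2*T1 < e * real M" using e by (simp add: field_simps)
    then show ?thesis using M1 e by (simp add: h_def field_simps)
  qed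
  have hM: "h * real M = 2*T1" using M1 by (simp add: h_def)
  define idx where "idx s = (if s < -T1 then 0 else if T1 \<le> s then M+1 else nat \<lfloor>(s+T1)/h\<rfloor> + 1)" for s
  have idx_le: "idx s \<le> M+1" for s
  proof (cases "s < -T1 \<or> T1 \<le> s")
    case False
    then have "(s+T1)/h < real M" using hpos hM by (simp add: field_simps)
    then have "\<lfloor>(s+T1)/h\<rfloor> < int M" by (simp add: floor_less_iff)
    then show ?thesis using False by (simp add: idx_def)
  qed (auto simp: idx_def)
  have idx_mono: "idx s \<le> idx s'" if ss: "s \<le> s'" for s s'
  proof -
    consider "s < -T1" | "T1 \<le> s" | "\<not> s < -T1" "\<not> T1 \<le> s" by blast
    then show ?thesis
    proof cases
      case 1 then show ?thesis by (simp add: idx_def)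
    next
      case 2 then show ?thesis using ss by (simp add: idx_def)
    next
      case 3
      show ?thesis
      proof (cases "T1 \<le> s'")
        case True then show ?thesis using idx_le[of s] ss by (simp add: idx_def)
      next
        case False
        have "(s+T1)/h \<le> (s'+T1)/h" using ss hpos by (simp add: divide_right_mono)
        then have "\<lfloor>(s+T1)/h\<rfloor> \<le> \<lfloor>(s'+T1)/h\<rfloor>" by (rule floor_mono)
        then show ?thesis using 3 False ss by (simp add: idx_def nat_mono)
      qed
    qed
  qed
  have idx_mid: "s \<in> ball (-T1 + real (i-1) * h) e \<and> -T1 + real (i-1) * h \<in> {-T1..T1}"
    if si: "idx s = i" and i1: "1 \<le> i" and iM: "i \<le> M" for s i
  proof -
    have nb: "\<not> s < -T1" "\<not> T1 \<le> s" using si i1 iM by (auto simp: idx_def split: if_splits)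
    then have "nat \<lfloor>(s+T1)/h\<rfloor> = i - 1" using si by (simp add: idx_def)
    moreover have "0 \<le> (s+T1)/h" using nb hpos by simp
    ultimately have fl: "\<lfloor>(s+T1)/h\<rfloor> = int (i - 1)" by linarith
    then have "real (i-1) \<le> (s+T1)/h" "(s+T1)/h < real (i-1) + 1" by linarith+
    then have lo: "real (i-1) * h \<le> s + T1" and hi: "s + T1 < real (i-1) * h + h" using hpos
      by (simp_all add: field_simps)
    have "dist s (-T1 + real (i-1) * h) < e" using lo hi he by (simp add: dist_real_def)
    moreover have "-T1 + real (i-1) * h \<in> {-T1..T1}" using lo nb hpos by (simp add: zero_le_mult_iff)
    ultimately show ?thesis by (simp add: dist_commute)
  qed
  have gooddata: "\<exists>N C q \<delta>. goodset f Lam X {s. idx s = i} N C q \<delta>" for i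
  proof -
    consider "i = 0" | "i = M+1" | "1 \<le> i" "i \<le> M" | "i > M+1" by linarith
    then show ?thesis
    proof cases
      case 1
      have "{s. idx s = i} \<subseteq> {..-T1}" using 1 M1 by (auto simp: idx_def split: if_splits)
      then show ?thesis using goodset_mono[OF gM1] by blast
    next
      case 2
      have "{s. idx s = i} \<subseteq> {T1..}"
      proof
        fix s assume "s \<in> {s. idx s = i}"
        then have "idx s = M+1" using 2 by simp
        moreover have "\<not> T1 \<le> s \<Longrightarrow> \<not> s < -T1 \<Longrightarrow> idx s \<le> M"
        proof -
          assume a: "\<not> T1 \<le> s" "\<not> s < -T1"
          then have "(s+T1)/h < real M" using hpos hM by (simp add: field_simps)
          then have "\<lfloor>(s+T1)/h\<rfloor> < int M" by (simp add: floor_less_iff)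
          moreover have "0 \<le> \<lfloor>(s+T1)/h\<rfloor>" using a hpos by simp
          ultimately have "nat \<lfloor>(s+T1)/h\<rfloor> < M" by (simp add: nat_less_iff)
          then show "idx s \<le> M" using a by (simp add: idx_def)
        qed
        ultimately show "s \<in> {T1..}" by (auto simp: idx_def split: if_splits)
      qed
      then show ?thesis using goodset_mono[OF gP1] by blast
    next
      case 3
      define c where "c = -T1 + real (i-1) * h"
      show ?thesis
      proof (cases "\<exists>s. idx s = i")
        case False
        then have "{s. idx s = i} = {}" by auto
        then show ?thesis using goodset_empty by metis
      next
        case True
      then have "c \<in> {-T1..T1}" using idx_mid 3 unfolding c_def by blast
      then obtain N C q \<delta> where g: "goodset f Lam X (ball c e) N C q \<delta>" using locE by blast
      have "{s. idx s = i} \<subseteq> ball c e" using idx_mid 3 unfolding c_def by blast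
      then show ?thesis using goodset_mono[OF g] by blast
      qed
    next
      case 4
      then have "{s. idx s = i} = {}" using idx_le by (auto simp: not_le[symmetric])
      then show ?thesis using goodset_empty by metis
    qed
  qed
  then obtain Nf Cf qf \<delta>f where gd: "\<And>i. goodset f Lam X {s. idx s = i} (Nf i) (Cf i) (qf i) (\<delta>f i)"
    by metis
  have anf: "\<And>i. anorm (Nf i) (Cf i)" and qf: "\<And>i. 0 \<le> qf i" "\<And>i. qf i < 1" and \<delta>f: "\<And>i. 0 < \<delta>f i"
    using gd unfolding goodset_def by blast+
  define K where "K = M + 1"
  define Cmax where "Cmax = Max (Cf ` {..K})"
  define qmax where "qmax = Max (qf ` {..K})"
  define \<delta>min where "\<delta>min = Min (\<delta>f ` {..K})"
  have Cmax: "\<And>i. i \<le> K \<Longrightarrow> Cf i \<le> Cmax" unfolding Cmax_def by (intro Max_ge) auto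
  have Cmax1: "1 \<le> Cmax" using Cmax[of 0] anormD(1)[OF anf[of 0]] by simp
  have qmax: "\<And>i. i \<le> K \<Longrightarrow> qf i \<le> qmax" unfolding qmax_def by (intro Max_ge) auto
  have qmax1: "qmax < 1" "0 \<le> qmax"
  proof -
    have "qmax \<in> qf ` {..K}" unfolding qmax_def by (intro Max_in) auto
    then show "qmax < 1" using qf by auto
    show "0 \<le> qmax" using qmax[of 0] qf[of 0] by simp
  qed
  have \<delta>min: "\<And>i. i \<le> K \<Longrightarrow> \<delta>min \<le> \<delta>f i" unfolding \<delta>min_def by (intro Min_le) auto
  have \<delta>min0: "0 < \<delta>min"
  proof -
    have "\<delta>min \<in> \<delta>f ` {..K}" unfolding \<delta>min_def by (intro Min_in) auto
    then show ?thesis using \<delta>f by auto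
  qed
  define \<rho>0 where "\<rho>0 = min \<delta>min (\<epsilon>/2) / Cmax^K"
  define Rad where "Rad i = \<rho>0 * Cmax^i" for i
  have \<rho>0: "0 < \<rho>0" using \<delta>min0 eps Cmax1 by (simp add: \<rho>0_def)
  have Rad_le: "Rad i \<le> min \<delta>min (\<epsilon>/2)" if "i \<le> K" for i
  proof -
    have "Rad i \<le> \<rho>0 * Cmax^K" unfolding Rad_def using \<rho>0 Cmax1 that
      by (intro mult_left_mono power_increasing) auto
    also have "\<dots> = min \<delta>min (\<epsilon>/2)" using Cmax1 by (simp add: \<rho>0_def)
    finally show ?thesis .
  qed
  have Rad_ge: "\<rho>0 \<le> Rad i" for i unfolding Rad_def using \<rho>0 Cmax1
    by (simp add: one_le_power)
  have chain: "Rad i * Cf j \<le> Rad j" if "i < j" "j \<le> K" for i j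
  proof -
    have "Rad i * Cf j \<le> Rad i * Cmax" using Cmax[OF that(2)] Rad_ge[of i] \<rho>0
      by (intro mult_left_mono) auto
    also have "\<dots> = \<rho>0 * Cmax^(Suc i)" by (simp add: Rad_def)
    also have "\<dots> \<le> \<rho>0 * Cmax^j" using that Cmax1 \<rho>0 by (intro mult_left_mono power_increasing) auto
    finally show ?thesis by (simp add: Rad_def)
  qed
  define D where "D = (1 - qmax) * \<rho>0 / Cmax"
  have D0: "D > 0" using qmax1 \<rho>0 Cmax1 by (simp add: D_def)
  have CD: "Cf i * D \<le> (1 - qf i) * Rad i" if "i \<le> K" for i
  proof -
    have "Cf i * D \<le> Cmax * D" using Cmax[OF that] D0 by (intro mult_right_mono) auto
    also have "\<dots> = (1 - qmax) * \<rho>0" using Cmax1 by (simp add: D_def)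
    also have "\<dots> \<le> (1 - qf i) * Rad i" using qmax[OF that] qmax1 Rad_ge[of i] \<rho>0
      by (intro mult_mono) auto
    finally show ?thesis .
  qed
  obtain r0 where r0: "r0 > 0" and r0d: "\<And>s s'. \<bar>s - s'\<bar> \<le> r0 \<Longrightarrow> norm (X s - X s') \<le> D"
    using unif_drift[OF Xc XP XM D0] by blast
  have "\<exists>y. is_solution f Lam r y \<and> (\<forall>n::int. norm (y n - X (r * of_int n)) < \<epsilon>)"
    if r: "0 < r" "r < r0" for r
  proof -
    define idn where "idn n = idx (r * of_int n)" for n :: int
    have idn_mono: "idn n \<le> idn (n+1)" for n unfolding idn_def using r by (intro idx_mono) simp
    have idn_le: "idn n \<le> K" for n unfolding idn_def K_def by (rule idx_le)
    have drift: "norm (X (r * of_int n) - X (r * of_int (n+1))) \<le> D" for n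
      using r by (intro r0d) (simp add: algebra_simps)
    have stepL: "Nf (idn n) (f (y, Lam (r * of_int n)) - X (r * of_int (n+1))) \<le> Rad (idn n)"
      if ey: "Nf (idn n) (y - X (r * of_int n)) \<le> Rad (idn n)" for n y
    proof -
      define i where "i = idn n"
      have iK: "i \<le> K" by (simp add: i_def idn_le)
      have g: "goodset f Lam X {s. idx s = i} (Nf i) (Cf i) (qf i) (\<delta>f i)" by (rule gd)
      have rn: "r * of_int n \<in> {s. idx s = i}" by (simp add: i_def idn_def)
      have an: "anorm (Nf i) (Cf i)" by (rule anf)
      have "norm (y - X (r * of_int n)) \<le> Rad i" using anormD(2)[OF an] ey unfolding i_def[symmetric] by (rule order_trans)
      also have "\<dots> \<le> \<delta>f i" using Rad_le[OF iK] \<delta>min[OF iK] by linarith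
      finally have yd: "norm (y - X (r * of_int n)) \<le> \<delta>f i" .
      have ct: "Nf i (f (y, Lam (r * of_int n)) - f (X (r * of_int n), Lam (r * of_int n))) \<le> qf i * Nf i (y - X (r * of_int n))"
        using g rn yd \<delta>f[of i] unfolding goodset_def by auto
      have eq: "f (y, Lam (r * of_int n)) - X (r * of_int (n+1)) =
          (f (y, Lam (r * of_int n)) - f (X (r * of_int n), Lam (r * of_int n))) + (X (r * of_int n) - X (r * of_int (n+1)))"
        using fixX[of "r * of_int n"] by simp
      have "Nf i (f (y, Lam (r * of_int n)) - X (r * of_int (n+1))) \<le>
          Nf i (f (y, Lam (r * of_int n)) - f (X (r * of_int n), Lam (r * of_int n))) + Nf i (X (r * of_int n) - X (r * of_int (n+1)))"
        unfolding eq by (rule anormD(4)[OF an])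
      also have "\<dots> \<le> qf i * Nf i (y - X (r * of_int n)) + Cf i * D"
      proof (rule add_mono[OF ct])
        have "Nf i (X (r * of_int n) - X (r * of_int (n+1))) \<le> Cf i * norm (X (r * of_int n) - X (r * of_int (n+1)))"
          by (rule anormD(3)[OF an])
        also have "\<dots> \<le> Cf i * D" using drift[of n] anormD(1)[OF an] by (intro mult_left_mono) auto
        finally show "Nf i (X (r * of_int n) - X (r * of_int (n+1))) \<le> Cf i * D" .
      qed
      also have "\<dots> \<le> qf i * Rad i + (1 - qf i) * Rad i"
        using ey qf[of i] CD[OF iK] unfolding i_def[symmetric] by (intro add_mono mult_left_mono) auto
      also have "\<dots> = Rad i" by (simp add: algebra_simps)
      finally show ?thesis by (simp add: i_def)
    qed
    define z where "z N n = itsol f Lam r (X (r * of_int (- int N))) (- int N) (nat (n + int N))" for N :: nat and n :: int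
    have zsol: "z N (n+1) = f (z N n, Lam (r * of_int n))" if "n \<ge> - int N" for N n
    proof -
      have "nat (n + 1 + int N) = Suc (nat (n + int N))" using that by simp
      moreover have "- int N + int (nat (n + int N)) = n" using that by simp
      ultimately show ?thesis by (simp add: z_def)
    qed
    have z0: "z N (- int N) = X (r * of_int (- int N))" for N by (simp add: z_def)
    have ztr: "Nf (idn n) (z N n - X (r * of_int n)) \<le> Rad (idn n)" if nN: "n \<ge> - int N" for N n
    proof -
      note TR = tracking[where e = "\<lambda>n. z N n - X (r * of_int n)" and idx = idn and K = K and nst = "- int N"
          and Nf = Nf and Cf = Cf and Rad = Rad]
      have st: "Nf (idn m) (z N (m+1) - X (r * of_int (m+1))) \<le> Rad (idn m)"
        if "m \<ge> - int N" "Nf (idn m) (z N m - X (r * of_int m)) \<le> Rad (idn m)" for m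
        using stepL[OF that(2)] zsol[OF that(1)] by simp
      have s0: "Nf (idn (- int N)) (z N (- int N) - X (r * of_int (- int N))) \<le> Rad (idn (- int N))"
        using z0[of N] anormD(3)[OF anf[of "idn (- int N)"], of 0] Rad_ge[of "idn (- int N)"] \<rho>0 by simp
      have anfK: "\<And>i. i \<le> K \<Longrightarrow> anorm (Nf i) (Cf i)" using anf by blast
      show ?thesis using TR[OF idn_mono idn_le anfK chain st s0 nN] by simp
    qed

    have zbnd: "norm (z N n - X (r * of_int n)) \<le> \<epsilon>/2" if "n \<ge> - int N" for N n
    proof -
      have "norm (z N n - X (r * of_int n)) \<le> Rad (idn n)"
        using anormD(2)[OF anf[of "idn n"]] ztr[OF that] by (rule order_trans)
      also have "\<dots> \<le> \<epsilon>/2" using Rad_le[OF idn_le[of n]] by linarith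
      finally show ?thesis .
    qed
    have evN: "eventually (\<lambda>N. - int N \<le> n) sequentially" for n
      by (rule eventually_sequentiallyI[of "nat (- n)"]) linarith
    have fC: "isCont (\<lambda>x. f (x, \<mu>)) x" for \<mu> x
    proof -
      have "isCont (\<lambda>x. (x, \<mu>)) x" by (intro continuous_intros)
      moreover have "isCont f (x, \<mu>)" using fcont unfolding continuous_on_eq_continuous_at[OF open_UNIV] by blast
      ultimately show ?thesis using continuous_at_compose by (fastforce simp: o_def)
    qed
    have stepconv: "(\<lambda>N. z N (n+1)) \<longlonglongrightarrow> f (L, Lam (r * of_int n))" if "(\<lambda>N. z N n) \<longlonglongrightarrow> L" for n L
    proof -
      have "(\<lambda>N. f (z N n, Lam (r * of_int n))) \<longlonglongrightarrow> f (L, Lam (r * of_int n))"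
        using isCont_tendsto_compose[OF fC that] .
      moreover have "eventually (\<lambda>N. f (z N n, Lam (r * of_int n)) = z N (n+1)) sequentially"
        using evN[of n] by (rule eventually_mono) (simp add: zsol)
      ultimately show ?thesis by (rule Lim_transform_eventually)
    qed
    define n1 :: int where "n1 = - int (nat \<lceil>T1/r\<rceil>) - 1"
    have idn0: "idn n = 0" if "n \<le> n1" for n
    proof -
      define c where "c = nat \<lceil>T1/r\<rceil>"
      have "T1/r \<le> real c" unfolding c_def by linarith
      then have Tc: "T1 \<le> r * real c" using r by (simp add: field_simps)
      have n1c: "real_of_int n1 = - real c - 1" by (simp add: n1_def c_def)
      have "r * of_int n \<le> r * of_int n1" using that r by simp
      also have "\<dots> = - (r * real c) - r" unfolding n1c by (simp add: algebra_simps)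
      finally have "r * of_int n < - T1" using Tc r by linarith
      then show ?thesis by (simp add: idn_def idx_def)
    qed
    have c0: "Nf 0 (f (x, Lam (r * of_int m)) - f (x', Lam (r * of_int m))) \<le> qf 0 * Nf 0 (x - x')"
      if m: "m \<le> n1" and x: "Nf 0 (x - X (r * of_int m)) \<le> Rad 0" and x': "Nf 0 (x' - X (r * of_int m)) \<le> Rad 0" for m x x'
    proof -
      have rm: "r * of_int m \<in> {s. idx s = 0}" using idn0[OF m] by (simp add: idn_def)
      have "Rad 0 \<le> \<delta>f 0" using Rad_le[of 0] \<delta>min[of 0] by (simp add: K_def)
      then have "norm (x - X (r * of_int m)) \<le> \<delta>f 0" "norm (x' - X (r * of_int m)) \<le> \<delta>f 0"
        using anormD(2)[OF anf[of 0]] x x' by (meson order_trans)+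
      then show ?thesis using gd[of 0] rm unfolding goodset_def by blast
    qed
    have cest: "m \<le> n1 \<longrightarrow> Nf 0 (z N' m - z N m) \<le> qf 0 ^ nat (m + int N) * (2 * Rad 0)"
      if NN: "N \<le> N'" and mN: "- int N \<le> m" for N N' m
      using mN
    proof (induction m rule: int_ge_induct)
      case base
      show ?case
      proof
        assume le: "- int N \<le> n1"
        have "Nf (idn (- int N)) (z N' (- int N) - X (r * of_int (- int N))) \<le> Rad (idn (- int N))"
          using NN by (intro ztr) simp
        then have "Nf 0 (z N' (- int N) - z N (- int N)) \<le> Rad 0" using idn0[OF le] z0[of N] by simp
        also have "\<dots> \<le> qf 0 ^ nat (- int N + int N) * (2 * Rad 0)" using Rad_ge[of 0] \<rho>0 by simp
        finally show "Nf 0 (z N' (- int N) - z N (- int N)) \<le> qf 0 ^ nat (- int N + int N) * (2 * Rad 0)" .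
      qed
    next
      case (step m)
      show ?case
      proof
        assume le: "m + 1 \<le> n1"
        then have le': "m \<le> n1" by simp
        have IH: "Nf 0 (z N' m - z N m) \<le> qf 0 ^ nat (m + int N) * (2 * Rad 0)" using step le' by simp
        have mN': "- int N' \<le> m" using step(1) NN by simp
        have e1: "Nf 0 (z N' m - X (r * of_int m)) \<le> Rad 0" using ztr[OF mN'] idn0[OF le'] by simp
        have e2: "Nf 0 (z N m - X (r * of_int m)) \<le> Rad 0" using ztr[OF step(1)] idn0[OF le'] by simp
        have "Nf 0 (z N' (m+1) - z N (m+1)) = Nf 0 (f (z N' m, Lam (r * of_int m)) - f (z N m, Lam (r * of_int m)))"
          using zsol[OF mN'] zsol[OF step(1)] by simp
        also have "\<dots> \<le> qf 0 * Nf 0 (z N' m - z N m)" by (rule c0[OF le' e1 e2])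
        also have "\<dots> \<le> qf 0 * (qf 0 ^ nat (m + int N) * (2 * Rad 0))" using IH qf[of 0] by (intro mult_left_mono) auto
        also have "\<dots> = qf 0 ^ nat (m + 1 + int N) * (2 * Rad 0)"
        proof -
          have "nat (m + 1 + int N) = Suc (nat (m + int N))" using step(1) by simp
          then show ?thesis by simp
        qed
        finally show "Nf 0 (z N' (m+1) - z N (m+1)) \<le> qf 0 ^ nat (m + 1 + int N) * (2 * Rad 0)" .
      qed
    qed
    have conv1: "convergent (\<lambda>N. z N n)" if nn1: "n \<le> n1" for n
    proof -
      have "Cauchy (\<lambda>N. z N n)"
      proof (rule metric_CauchyI)
        fix e' :: real assume e': "0 < e'"
        have R0: "0 < Rad 0" using Rad_ge[of 0] \<rho>0 by simp
        obtain k where k: "qf 0 ^ k < e' / (2 * Rad 0)"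
          using real_arch_pow_inv[of "e' / (2 * Rad 0)" "qf 0"] e' R0 qf[of 0] by auto
        have est: "dist (z a n) (z b n) < e'" if ab: "b \<le> a" "b \<ge> nat (- n) + k" for a b
        proof -
          have bn: "- int b \<le> n" using ab by linarith
          have kk: "k \<le> nat (n + int b)" using ab by linarith
          have "dist (z a n) (z b n) = norm (z a n - z b n)" by (simp add: dist_norm)
          also have "\<dots> \<le> Nf 0 (z a n - z b n)" by (rule anormD(2)[OF anf])
          also have "\<dots> \<le> qf 0 ^ nat (n + int b) * (2 * Rad 0)" using cest[OF ab(1) bn] nn1 by simp
          also have "\<dots> \<le> qf 0 ^ k * (2 * Rad 0)" using kk qf[of 0] R0
            by (intro mult_right_mono power_decreasing) (auto simp: less_imp_le)
          also have "\<dots> < e' / (2 * Rad 0) * (2 * Rad 0)" using k R0 by (intro mult_strict_right_mono) auto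
          also have "\<dots> = e'" using R0 by simp
          finally show ?thesis .
        qed
        show "\<exists>M. \<forall>a\<ge>M. \<forall>b\<ge>M. dist (z a n) (z b n) < e'"
        proof (intro exI allI impI)
          fix a b assume a: "a \<ge> nat (- n) + k" and b: "b \<ge> nat (- n) + k"
          show "dist (z a n) (z b n) < e'"
          proof (cases "b \<le> a")
            case True then show ?thesis using est b by blast
          next
            case False then show ?thesis using est[of a b] a by (simp add: dist_commute)
          qed
        qed
      qed
      then show ?thesis by (rule Cauchy_convergent)
    qed
    have conv: "convergent (\<lambda>N. z N n)" for n
    proof (cases "n \<le> n1")
      case True then show ?thesis by (rule conv1)
    next
      case False
      then have "n1 \<le> n" by simp
      then show ?thesis
      proof (induction n rule: int_ge_induct)
        case base then show ?case by (rule conv1) simp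
      next
        case (step m)
        then obtain L where "(\<lambda>N. z N m) \<longlonglongrightarrow> L" by (auto simp: convergent_def)
        then show ?case using stepconv by (auto simp: convergent_def)
      qed
    qed
    define y where "y n = lim (\<lambda>N. z N n)" for n
    have yl: "(\<lambda>N. z N n) \<longlonglongrightarrow> y n" for n using conv[of n] by (simp add: y_def convergent_LIMSEQ_iff)
    have "is_solution f Lam r y"
      unfolding is_solution_def
    proof
      fix n :: int
      show "y (n + 1) = f (y n, Lam (r * of_int n))"
        using LIMSEQ_unique[OF yl[of "n+1"] stepconv[OF yl[of n]]] .
    qed
    moreover have "norm (y n - X (r * of_int n)) < \<epsilon>" for n
    proof -
      have "norm (y n - X (r * of_int n)) \<le> \<epsilon>/2"
      proof (rule tendsto_upperbound)
        show "((\<lambda>N. norm (z N n - X (r * of_int n))) \<longlongrightarrow> norm (y n - X (r * of_int n))) sequentially"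
          using yl[of n] by (intro tendsto_intros)
        show "eventually (\<lambda>N. norm (z N n - X (r * of_int n)) \<le> \<epsilon>/2) sequentially"
          using evN[of n] by (rule eventually_mono) (rule zbnd)
      qed simp
      then show ?thesis using eps by linarith
    qed
    ultimately show ?thesis by blast
  qed
  then show ?thesis using r0 by blast
qed

end
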